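(* For $|q|<1$, \[ -q\left(\frac{f_5^5}{f_1}+2q\frac{f_{10}^5}{f_2}\right)^2+f_1^4f_5^4+9q\frac{f_5^{10}}{f_1^2}-8q^3\frac{f_{10}^{10}}{f_2^2}=\frac{f_2^4f_5^{12}}{f_1^4f_{10}^4}+4q^2\frac{f_2^2f_5^2f_{10}^6}{f_1^2}. \]
   Context: For $m\in\mathbb{N}$ and $|q|<1$, $f_m:=\prod_{n\ge1}(1-q^{mn})$. *)

theory Defs
  imports "HOL-Analysis.Analysis"
begin

definition eta_f :: "nat \<Rightarrow> complex \<Rightarrow> complex" where
  "eta_f m q = (\<Prod>n. (1 - q ^ (m * Suc n)))"

end

theory Submission
  imports Defs "HOL-Analysis.Analysis"
begin

fun gb :: "'a::comm_ring_1 \<Rightarrow> nat \<Rightarrow> nat \<Rightarrow> 'a" where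
  "gb x 0 k = (if k = 0 then 1 else 0)"
| "gb x (Suc M) k = gb x M k + (if k = 0 then 0 else x ^ (M + 1 - k) * gb x M (k - 1))"

lemma gb_gt: "k > M \<Longrightarrow> gb x M k = 0"
  by (induction M arbitrary: k) auto

lemma gb_0 [simp]: "gb x M 0 = 1"
  by (induction M) auto

lemma tri_Suc: "Suc k * k div 2 = k * (k - 1) div 2 + k"
proof (cases k)
  case 0 then show ?thesis by simp
next
  case (Suc j)
  have "Suc (Suc j) * Suc j = Suc j * j + 2 * Suc j" by simp
  then show ?thesis using Suc by simp
qed

lemma cauchy_qbinom:
  fixes x y :: "'a::comm_ring_1"
  shows "(\<Prod>j<M. 1 + y * x ^ j) = (\<Sum>k\<le>M. gb x M k * x ^ (k * (k - 1) div 2) * y ^ k)"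
proof (induction M)
  case 0 then show ?case by simp
next
  case (Suc M)
  have A: "(\<Sum>k\<le>Suc M. gb x M k * x ^ (k * (k - 1) div 2) * y ^ k)
        = (\<Sum>k\<le>M. gb x M k * x ^ (k * (k - 1) div 2) * y ^ k)"
    by (simp add: gb_gt)
  have B: "(\<Sum>k\<le>Suc M. (if k = 0 then 0 else x ^ (M + 1 - k) * gb x M (k - 1)) * x ^ (k * (k - 1) div 2) * y ^ k)
        = (\<Sum>k\<le>M. x ^ (M - k) * gb x M k * x ^ (Suc k * k div 2) * y ^ Suc k)"
    by (subst sum.atMost_Suc_shift) simp
  have C: "(\<Sum>k\<le>M. x ^ (M - k) * gb x M k * x ^ (Suc k * k div 2) * y ^ Suc k)
        = (\<Sum>k\<le>M. gb x M k * x ^ (k * (k - 1) div 2) * y ^ k * (y * x ^ M))"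
  proof (rule sum.cong[OF refl])
    fix k assume "k \<in> {..M}"
    then have eq: "M - k + (k * (k - 1) div 2 + k) = k * (k - 1) div 2 + M" by auto
    have "x ^ (M - k) * x ^ (Suc k * k div 2) = x ^ (M - k + (k * (k - 1) div 2 + k))"
      by (simp only: tri_Suc power_add)
    also have "\<dots> = x ^ (k * (k - 1) div 2) * x ^ M"
      by (subst eq) (simp only: power_add)
    finally have "x ^ (M - k) * x ^ (Suc k * k div 2) = x ^ (k * (k - 1) div 2) * x ^ M" .
    then show "x ^ (M - k) * gb x M k * x ^ (Suc k * k div 2) * y ^ Suc k
        = gb x M k * x ^ (k * (k - 1) div 2) * y ^ k * (y * x ^ M)"
      by (simp add: algebra_simps)
  qed
  have "(\<Prod>j<Suc M. 1 + y * x ^ j) = (\<Prod>j<M. 1 + y * x ^ j) * (1 + y * x ^ M)" by simp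
  also have "\<dots> = (\<Sum>k\<le>M. gb x M k * x ^ (k * (k - 1) div 2) * y ^ k)
      + (\<Sum>k\<le>M. gb x M k * x ^ (k * (k - 1) div 2) * y ^ k * (y * x ^ M))"
    by (simp add: Suc distrib_left sum_distrib_right)
  also have "\<dots> = (\<Sum>k\<le>Suc M. gb x (Suc M) k * x ^ (k * (k - 1) div 2) * y ^ k)"
    by (simp only: gb.simps distrib_right sum.distrib A B C)
  finally show ?case .
qed

lemma gb_diag [simp]: "gb x M M = 1"
  by (induction M) (auto simp: gb_gt)

definition qpoch :: "'a::comm_ring_1 \<Rightarrow> nat \<Rightarrow> 'a" where
  "qpoch x n = (\<Prod>j<n. 1 - x ^ Suc j)"

lemma gb_closed:
  fixes x :: "'a::comm_ring_1"
  shows "k \<le> M \<Longrightarrow> gb x M k * qpoch x k * qpoch x (M - k) = qpoch x M"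
proof (induction M arbitrary: k)
  case 0 then show ?case by (simp add: qpoch_def)
next
  case (Suc M)
  show ?case
  proof (cases "k = 0")
    case True then show ?thesis by (simp add: qpoch_def)
  next
    case False
    then obtain j where j: "k = Suc j" by (cases k) auto
    show ?thesis
    proof (cases "k = Suc M")
      case True
      then show ?thesis using Suc.IH[of M] j by (simp add: gb_gt qpoch_def)
    next
      case False
      with Suc.prems j have jM: "j < M" by auto
      have h1: "gb x M k * qpoch x k * qpoch x (M - k) = qpoch x M"
        using Suc.IH[of k] jM j by simp
      have h2: "gb x M j * qpoch x j * qpoch x (M - j) = qpoch x M"
        using Suc.IH[of j] jM by simp
      have e1: "qpoch x (Suc M - k) = qpoch x (M - k) * (1 - x ^ (M + 1 - k))"
      proof -
        have d: "Suc M - k = Suc (M - k)" "M + 1 - k = Suc (M - k)" using jM j by auto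
        show ?thesis unfolding d by (simp add: qpoch_def)
      qed
      have e2: "qpoch x k = qpoch x j * (1 - x ^ k)"
        using j by (simp add: qpoch_def)
      have e3: "Suc M - k = M - j" using j by simp
      have "gb x (Suc M) k * qpoch x k * qpoch x (Suc M - k)
          = (gb x M k * qpoch x k * qpoch x (M - k)) * (1 - x ^ (M + 1 - k))
            + x ^ (M + 1 - k) * (gb x M j * qpoch x j * qpoch x (M - j)) * (1 - x ^ k)"
      proof -
        have g: "gb x (Suc M) k = gb x M k + x ^ (M + 1 - k) * gb x M j" using j by simp
        have t1: "gb x M k * qpoch x k * qpoch x (Suc M - k) = (gb x M k * qpoch x k * qpoch x (M - k)) * (1 - x ^ (M + 1 - k))"
          by (simp only: e1 mult.assoc)
        have t2: "x ^ (M + 1 - k) * gb x M j * qpoch x k * qpoch x (Suc M - k) = x ^ (M + 1 - k) * (gb x M j * qpoch x j * qpoch x (M - j)) * (1 - x ^ k)"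
          by (simp only: e2 e3 mult_ac)
        show ?thesis unfolding g distrib_right t1 t2 ..
      qed
      also have "\<dots> = qpoch x M * (1 - x ^ (M + 1 - k) + x ^ (M + 1 - k) * (1 - x ^ k))"
        unfolding h1 h2 by (simp add: algebra_simps)
      also have "\<dots> = qpoch x M * (1 - x ^ Suc M)"
        using jM j by (simp add: algebra_simps power_add[symmetric])
      also have "\<dots> = qpoch x (Suc M)" by (simp add: qpoch_def)
      finally show ?thesis .
    qed
  qed
qed

lemma gb_norm_le:
  fixes x :: "'a::{comm_ring_1, real_normed_algebra_1}"
  shows "norm (gb x M k) \<le> gb (norm x) M k"
proof (induction M arbitrary: k)
  case 0 then show ?case by simp
next
  case (Suc M)
  have "norm (gb x (Suc M) k) \<le> norm (gb x M k) + norm (if k = 0 then 0 else x ^ (M + 1 - k) * gb x M (k - 1))"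
    by (simp add: norm_triangle_ineq)
  also have "\<dots> \<le> gb (norm x) M k + (if k = 0 then 0 else norm x ^ (M + 1 - k) * gb (norm x) M (k - 1))"
  proof -
    have "norm (x ^ (M + 1 - k) * gb x M (k - 1)) \<le> norm x ^ (M + 1 - k) * gb (norm x) M (k - 1)"
      by (rule order_trans[OF norm_mult_ineq]) (simp add: mult_mono norm_power_ineq Suc.IH)
    then show ?thesis using Suc.IH[of k] by auto
  qed
  finally show ?case by simp
qed

definition tr :: "int \<Rightarrow> int" where "tr m = m * (m - 1) div 2"

lemma two_tr: "2 * tr m = m * (m - 1)"
proof -
  have "even (m * (m - 1))" by simp
  then show ?thesis unfolding tr_def by simp
qed

lemma two_tri_nat: "2 * (k * (k - 1) div 2) = k * (k - (1::nat))"
proof -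
  have "even (k * (k - 1))" by (cases k) auto
  then show ?thesis by simp
qed

lemma prod_split_add:
  fixes g :: "nat \<Rightarrow> 'a::comm_monoid_mult"
  shows "(\<Prod>j<N + M. g j) = (\<Prod>j<N. g j) * (\<Prod>j<M. g (N + j))"
  by (induction M) (auto simp: mult.assoc)

lemma prod_xpow: "(\<Prod>i<N. x ^ Suc i) = x ^ (N * Suc N div 2)"
proof (induction N)
  case 0 then show ?case by simp
next
  case (Suc N)
  have "Suc N * Suc (Suc N) div 2 = N * Suc N div 2 + Suc N"
  proof -
    have "even (N * Suc N)" by simp
    then show ?thesis by (simp add: algebra_simps)
  qed
  then show ?case using Suc by (simp add: power_add mult_ac)
qed

lemma int_tri_eq:
  "int (k * (k - 1) div 2) - int N * int k = tr (int k - int N) - int (N * Suc N div 2)"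
proof -
  have a: "2 * int (k * (k - 1) div 2) = int k * (int k - 1)"
  proof -
    have "2 * int (k * (k - 1) div 2) = int (2 * (k * (k - 1) div 2))" by simp
    also have "\<dots> = int (k * (k - 1))" by (simp only: two_tri_nat)
    also have "\<dots> = int k * (int k - 1)" by (cases k) (simp_all add: algebra_simps)
    finally show ?thesis .
  qed
  have b: "2 * int (N * Suc N div 2) = int N * (int N + 1)"
  proof -
    have "even (N * Suc N)" by simp
    then have e: "2 * (N * Suc N div 2) = N * Suc N" by (metis dvd_mult_div_cancel)
    have "2 * int (N * Suc N div 2) = int (2 * (N * Suc N div 2))" by (simp only: of_nat_mult of_nat_numeral)
    also have "\<dots> = int (N * Suc N)" by (simp only: e)
    also have "\<dots> = int N * (int N + 1)" by (simp add: algebra_simps)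
    finally show ?thesis .
  qed
  have c: "2 * tr (int k - int N) = (int k - int N) * (int k - int N - 1)" by (rule two_tr)
  have "2 * (int (k * (k - 1) div 2) - int N * int k) = 2 * (tr (int k - int N) - int (N * Suc N div 2))"
    unfolding right_diff_distrib a b c by (simp add: algebra_simps)
  then show ?thesis by simp
qed

lemma finite_jtp:
  fixes x z :: complex
  assumes x: "x \<noteq> 0" and z: "z \<noteq> 0"
  shows "(\<Prod>j<N. (1 + z * x ^ j) * (1 + x ^ Suc j / z))
       = (\<Sum>k\<le>2*N. gb x (2*N) k * (x powi tr (int k - int N) * z powi (int k - int N)))"
proof -
  define y where "y = z * x powi (- int N)"
  define c where "c = z ^ N / x ^ (N * Suc N div 2)"
  have c0: "c \<noteq> 0" using x z by (simp add: c_def)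
  have P1: "(\<Prod>j<N. 1 + y * x ^ (N + j)) = (\<Prod>j<N. 1 + z * x ^ j)"
  proof (rule prod.cong[OF refl])
    fix j
    have "x powi (- int N) * x ^ (N + j) = x ^ j"
      using x by (simp add: power_int_minus power_add field_simps)
    then show "1 + y * x ^ (N + j) = 1 + z * x ^ j" by (simp add: y_def mult.assoc)
  qed
  have P2: "(\<Prod>j<N. 1 + y * x ^ j) = c * (\<Prod>j<N. 1 + x ^ Suc j / z)"
  proof -
    have "(\<Prod>j<N. 1 + y * x ^ j) = (\<Prod>i<N. 1 + y * x ^ (N - Suc i))"
      by (rule prod.nat_diff_reindex[symmetric])
    also have "\<dots> = (\<Prod>i<N. (z / x ^ Suc i) * (1 + x ^ Suc i / z))"
    proof (rule prod.cong[OF refl])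
      fix i assume "i \<in> {..<N}"
      then have "N = (N - Suc i) + Suc i" by simp
      then have "x ^ N = x ^ (N - Suc i) * x ^ Suc i" by (metis power_add)
      then have "x powi (- int N) * x ^ (N - Suc i) = 1 / x ^ Suc i"
        using x by (simp add: power_int_minus field_simps)
      then show "1 + y * x ^ (N - Suc i) = (z / x ^ Suc i) * (1 + x ^ Suc i / z)"
        using x z by (simp add: y_def field_simps)
    qed
    also have "\<dots> = (\<Prod>i<N. z / x ^ Suc i) * (\<Prod>i<N. 1 + x ^ Suc i / z)"
      by (rule prod.distrib)
    also have "(\<Prod>i<N. z / x ^ Suc i) = c"
      by (simp only: c_def prod_dividef prod_xpow prod_constant card_lessThan)
    finally show ?thesis .
  qed
  have L: "(\<Prod>j<2*N. 1 + y * x ^ j) = c * (\<Prod>j<N. (1 + z * x ^ j) * (1 + x ^ Suc j / z))"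
  proof -
    have "(\<Prod>j<2*N. 1 + y * x ^ j) = (\<Prod>j<N. 1 + y * x ^ j) * (\<Prod>j<N. 1 + y * x ^ (N + j))"
      using prod_split_add[of "\<lambda>j. 1 + y * x ^ j" N N] by (simp add: mult_2)
    also have "\<dots> = c * ((\<Prod>j<N. 1 + x ^ Suc j / z) * (\<Prod>j<N. 1 + z * x ^ j))"
      by (simp add: P1 P2)
    finally show ?thesis by (simp add: prod.distrib mult_ac)
  qed
  have R: "x ^ (k * (k - 1) div 2) * y ^ k = c * (x powi tr (int k - int N) * z powi (int k - int N))" for k
  proof -
    have "x ^ (k * (k - 1) div 2) * y ^ k = z ^ k * x powi (int (k * (k - 1) div 2) - int N * int k)"
      proof -
      have e1: "y ^ k = z ^ k * (x powi (- int N)) ^ k" by (simp add: y_def power_mult_distrib)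
      have e2: "(x powi (- int N)) ^ k = x powi (- int N * int k)"
        by (simp only: power_int_mult power_int_of_nat)
      have e3: "x ^ (k * (k - 1) div 2) = x powi int (k * (k - 1) div 2)"
        by (simp only: power_int_of_nat)
      have e4: "x powi int (k * (k - 1) div 2) * x powi (- int N * int k) = x powi (int (k * (k - 1) div 2) - int N * int k)"
      proof -
        have h: "int (k * (k - 1) div 2) - int N * int k = int (k * (k - 1) div 2) + (- int N * int k)" by simp
        show ?thesis unfolding h by (rule power_int_add[OF disjI1[OF x], symmetric])
      qed
      show ?thesis unfolding e1 e2 e3 e4[symmetric] by (simp only: mult_ac)
    qed
    also have "\<dots> = z ^ k * x powi (tr (int k - int N) - int (N * Suc N div 2))"
      by (simp only: int_tri_eq)
    also have "\<dots> = c * (x powi tr (int k - int N) * z powi (int k - int N))"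
      proof -
      have e1: "x powi (tr (int k - int N) - int (N * Suc N div 2)) = x powi tr (int k - int N) / x ^ (N * Suc N div 2)"
        using x by (simp add: power_int_diff power_int_of_nat)
      have e2: "z powi (int k - int N) = z ^ k / z ^ N"
        using z by (simp add: power_int_diff power_int_of_nat)
      show ?thesis unfolding e1 e2 c_def using x z by (simp add: field_simps)
    qed
    finally show ?thesis .
  qed
  have "c * (\<Prod>j<N. (1 + z * x ^ j) * (1 + x ^ Suc j / z))
      = c * (\<Sum>k\<le>2*N. gb x (2*N) k * (x powi tr (int k - int N) * z powi (int k - int N)))"
    unfolding L[symmetric] cauchy_qbinom sum_distrib_left
  proof (rule sum.cong[OF refl])
    fix k
    have "gb x (2*N) k * x ^ (k*(k-1) div 2) * y ^ k = gb x (2*N) k * (x ^ (k*(k-1) div 2) * y ^ k)"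
      by (simp only: mult.assoc)
    also have "\<dots> = gb x (2*N) k * (c * (x powi tr (int k - int N) * z powi (int k - int N)))"
      by (simp only: R)
    also have "\<dots> = c * (gb x (2*N) k * (x powi tr (int k - int N) * z powi (int k - int N)))"
      by (simp only: mult.left_commute)
    finally show "gb x (2*N) k * x ^ (k*(k-1) div 2) * y ^ k = c * (gb x (2*N) k * (x powi tr (int k - int N) * z powi (int k - int N)))" .
  qed
  then show ?thesis using c0 by simp
qed

lemma qfac_conv:
  fixes x :: "'a::{real_normed_field, banach}"
  assumes "norm x < 1"
  shows "convergent_prod (\<lambda>j. 1 - x ^ Suc j)"
proof -
  have "summable (\<lambda>j. norm x * norm x ^ j)"
    by (rule summable_mult) (simp add: summable_geometric assms)
  then have "summable (\<lambda>j. norm ((1 - x ^ Suc j) - 1))"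
    by (simp add: norm_power norm_mult)
  then show ?thesis
    by (intro abs_convergent_prod_imp_convergent_prod summable_imp_abs_convergent_prod)
qed

lemma qfac_nz:
  fixes x :: "'a::{real_normed_field, banach}"
  assumes "norm x < 1"
  shows "1 - x ^ Suc j \<noteq> 0"
proof
  assume "1 - x ^ Suc j = 0"
  then have "norm (x ^ Suc j) = 1" by (metis eq_iff_diff_eq_0 norm_one)
  moreover have "norm (x ^ Suc j) < 1"
  proof -
    have "norm x ^ j \<le> 1" using assms by (simp add: power_le_one less_imp_le)
    then have "norm x * norm x ^ j < 1"
      using order_le_less_trans[OF mult_left_le[OF _ norm_ge_zero] assms] by blast
    then show ?thesis by (simp add: norm_power norm_mult)
  qed
  ultimately show False by simp
qed

lemma qinf_nz:
  fixes x :: "'a::{real_normed_field, banach}"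
  assumes "norm x < 1"
  shows "(\<Prod>j. 1 - x ^ Suc j) \<noteq> 0"
  using prodinf_nonzero[OF qfac_conv[OF assms] qfac_nz[OF assms]] .

lemma qpoch_nz:
  fixes x :: "'a::{real_normed_field, banach}"
  assumes "norm x < 1"
  shows "qpoch x n \<noteq> 0"
  unfolding qpoch_def using qfac_nz[OF assms] by (simp add: prod_zero_iff)

lemma qpoch_lim:
  fixes x :: "'a::{real_normed_field, banach}"
  assumes "norm x < 1"
  shows "(\<lambda>n. qpoch x n) \<longlonglongrightarrow> (\<Prod>j. 1 - x ^ Suc j)"
proof -
  have "(\<lambda>n. prod (\<lambda>j. 1 - x ^ Suc j) {..n}) \<longlonglongrightarrow> (\<Prod>j. 1 - x ^ Suc j)"
    by (rule convergent_prod_LIMSEQ[OF qfac_conv[OF assms]])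
  then have "(\<lambda>n. prod (\<lambda>j. 1 - x ^ Suc j) {..<Suc n}) \<longlonglongrightarrow> (\<Prod>j. 1 - x ^ Suc j)"
    by (simp add: lessThan_Suc_atMost)
  then show ?thesis unfolding qpoch_def by (rule LIMSEQ_imp_Suc)
qed

lemma qpoch_real_ge:
  fixes r :: real
  assumes "0 \<le> r" "r < 1"
  shows "(\<Prod>j. 1 - r ^ Suc j) \<le> qpoch r n"
proof -
  have "convergent_prod (\<lambda>j. 1 - r ^ Suc j)" using qfac_conv[of r] assms by simp
  then have hp: "(\<lambda>j. 1 - r ^ Suc j) has_prod (\<Prod>j. 1 - r ^ Suc j)"
    by (simp add: convergent_prod_has_prod)
  have le1: "r ^ Suc j \<le> 1" for j using assms by (intro power_le_one) auto
  show ?thesis unfolding qpoch_def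
    by (rule prod_ge_prodinf[OF hp]) (use assms le1 in \<open>auto simp del: power_Suc\<close>)
qed

lemma qinf_real_pos:
  fixes r :: real
  assumes "0 \<le> r" "r < 1"
  shows "0 < (\<Prod>j. 1 - r ^ Suc j)"
proof -
  have "convergent_prod (\<lambda>j. 1 - r ^ Suc j)" using qfac_conv[of r] assms by simp
  moreover have "0 \<le> (\<Prod>j. 1 - r ^ Suc j)"
  proof (rule has_prod_nonneg)
    show "(\<lambda>j. 1 - r ^ Suc j) has_prod (\<Prod>j. 1 - r ^ Suc j)"
      using calculation by (simp add: convergent_prod_has_prod)
    show "0 \<le> 1 - r ^ Suc j" for j using assms power_le_one[of r "Suc j"] by (simp del: power_Suc)
  qed
  moreover have "(\<Prod>j. 1 - r ^ Suc j) \<noteq> 0" using qinf_nz[of r] assms by simp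
  ultimately show ?thesis by simp
qed

lemma qpoch_real_mono:
  fixes r :: real
  assumes "0 \<le> r" "r < 1" "k \<le> M"
  shows "qpoch r M \<le> qpoch r k"
proof -
  have "qpoch r M = qpoch r k * (\<Prod>j\<in>{k..<M}. 1 - r ^ Suc j)"
    unfolding qpoch_def using assms(3)
    by (metis prod.atLeastLessThan_concat lessThan_atLeast0 zero_le)
  also have "\<dots> \<le> qpoch r k * 1"
  proof (rule mult_left_mono)
    show "(\<Prod>j\<in>{k..<M}. 1 - r ^ Suc j) \<le> 1"
      using assms power_le_one[of r] by (intro prod_le_1) (auto simp del: power_Suc)
    show "0 \<le> qpoch r k" unfolding qpoch_def
      using assms power_le_one[of r] by (intro prod_nonneg) (auto simp del: power_Suc)
  qed
  finally show ?thesis by simp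
qed

lemma gb_real_bound:
  fixes r :: real
  assumes "0 \<le> r" "r < 1"
  shows "gb r M k \<le> 1 / (\<Prod>j. 1 - r ^ Suc j)"
proof (cases "k \<le> M")
  case False
  then show ?thesis using gb_gt[of M k r] qinf_real_pos[OF assms] by simp
next
  case True
  have pk: "0 < qpoch r n" for n
  proof -
    have "0 < (\<Prod>j. 1 - r ^ Suc j)" by (rule qinf_real_pos[OF assms])
    also have "\<dots> \<le> qpoch r n" by (rule qpoch_real_ge[OF assms])
    finally show ?thesis .
  qed
  have "gb r M k = qpoch r M / (qpoch r k * qpoch r (M - k))"
  proof -
    have h: "gb r M k * (qpoch r k * qpoch r (M - k)) = qpoch r M"
      using gb_closed[OF True, of r] by (simp add: mult.assoc)
    have "qpoch r k * qpoch r (M - k) \<noteq> 0" using pk[of k] pk[of "M-k"] by simp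
    then show ?thesis using h by (simp add: eq_divide_eq)
  qed
  also have "\<dots> \<le> qpoch r k / (qpoch r k * qpoch r (M - k))"
    by (intro divide_right_mono qpoch_real_mono assms True) (use pk in \<open>simp add: less_imp_le\<close>)
  also have "\<dots> = 1 / qpoch r (M - k)" using pk[of k] pk[of "M-k"] by (simp add: field_simps)
  also have "\<dots> \<le> 1 / (\<Prod>j. 1 - r ^ Suc j)"
    by (intro divide_left_mono qpoch_real_ge assms) (use pk qinf_real_pos[OF assms] in auto)
  finally show ?thesis .
qed

lemma gb_lim:
  fixes x :: "'a::{real_normed_field, banach}"
  assumes "norm x < 1"
  shows "(\<lambda>N. gb x (2*N) (N + i)) \<longlonglongrightarrow> 1 / (\<Prod>j. 1 - x ^ Suc j)"
proof -
  define P where "P = (\<Prod>j. 1 - x ^ Suc j)"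
  have P0: "P \<noteq> 0" unfolding P_def by (rule qinf_nz[OF assms])
  have ev: "eventually (\<lambda>N. gb x (2*N) (N + i) = qpoch x (2*N) / (qpoch x (N + i) * qpoch x (N - i))) sequentially"
    using eventually_ge_at_top[of i]
  proof eventually_elim
    case (elim N)
    then have "N + i \<le> 2 * N" "2 * N - (N + i) = N - i" by auto
    then show ?case using gb_closed[of "N+i" "2*N" x] qpoch_nz[OF assms]
      by (simp add: field_simps)
  qed
  have l1: "(\<lambda>N. qpoch x (2*N)) \<longlonglongrightarrow> P"
    unfolding P_def by (rule filterlim_compose[OF qpoch_lim[OF assms]]) (rule filterlim_subseq, simp add: strict_mono_def)
  have l2: "(\<lambda>N. qpoch x (N + i)) \<longlonglongrightarrow> P"
    unfolding P_def by (rule filterlim_compose[OF qpoch_lim[OF assms]]) (rule filterlim_add_const_nat_at_top)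
  have l3: "(\<lambda>N. qpoch x (N - i)) \<longlonglongrightarrow> P"
    unfolding P_def by (rule filterlim_compose[OF qpoch_lim[OF assms]]) (rule filterlim_minus_const_nat_at_top)
  have "(\<lambda>N. qpoch x (2*N) / (qpoch x (N + i) * qpoch x (N - i))) \<longlonglongrightarrow> P / (P * P)"
    by (intro tendsto_intros l1 l2 l3) (simp add: P0)
  then have "(\<lambda>N. gb x (2*N) (N + i)) \<longlonglongrightarrow> P / (P * P)"
    using ev by (simp add: tendsto_cong)
  then show ?thesis using P0 by (simp add: P_def)
qed

definition jt :: "complex \<Rightarrow> complex \<Rightarrow> int \<Rightarrow> complex" where
  "jt x z m = x powi tr m * z powi m"

lemma tr_plus1: "tr (m + 1) = tr m + m"
proof -
  have "2 * tr (m + 1) = 2 * (tr m + m)" unfolding distrib_left two_tr by (simp add: algebra_simps)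
  then show ?thesis by simp
qed

lemma tr_neg: "tr (- m) = tr m + m"
proof -
  have "2 * tr (- m) = 2 * (tr m + m)" unfolding distrib_left two_tr by (simp add: algebra_simps)
  then show ?thesis by simp
qed

lemma jt_neg:
  assumes x: "x \<noteq> 0" and z: "z \<noteq> 0"
  shows "jt x z (- m) = jt x (x / z) m"
proof -
  have "jt x z (- m) = x powi (tr m + m) * z powi (- m)" unfolding jt_def tr_neg ..
  also have "\<dots> = x powi tr m * (x powi m / z powi m)"
    using x z by (simp add: power_int_add power_int_minus field_simps)
  also have "\<dots> = jt x (x / z) m" unfolding jt_def by (simp add: power_int_divide_distrib)
  finally show ?thesis .
qed

lemma jt_Suc:
  assumes x: "x \<noteq> 0"
  shows "jt x z (int (Suc i)) = jt x z (int i) * (x ^ i * z)"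
proof -
  have "jt x z (int (Suc i)) = x powi (tr (int i) + int i) * z powi (int i + 1)"
  proof -
    have e: "int (Suc i) = int i + 1" by simp
    show ?thesis unfolding jt_def e tr_plus1 ..
  qed
  also have "\<dots> = jt x z (int i) * (x ^ i * z)"
    using x unfolding jt_def by (simp add: power_int_add power_int_of_nat mult_ac)
  finally show ?thesis .
qed

lemma jt_summable:
  assumes x: "x \<noteq> 0" and xl: "norm x < 1"
  shows "summable (\<lambda>i. norm (jt x z (int i)))"
proof -
  have "(\<lambda>n. norm x ^ n * norm z) \<longlonglongrightarrow> 0 * norm z"
    by (intro tendsto_intros LIMSEQ_power_zero) (use xl in simp)
  then have "eventually (\<lambda>n. norm x ^ n * norm z < 1/2) sequentially"
    by (intro order_tendstoD(2)) auto
  then obtain N0 where N0: "\<And>n. n \<ge> N0 \<Longrightarrow> norm x ^ n * norm z < 1/2"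
    unfolding eventually_sequentially by blast
  show ?thesis
  proof (rule summable_ratio_test[of "1/2" N0])
    fix n assume "N0 \<le> n"
    then have b: "norm x ^ n * norm z \<le> 1/2" using N0 by (simp add: less_imp_le)
    have "norm (norm (jt x z (int (Suc n)))) = norm (jt x z (int n)) * (norm x ^ n * norm z)"
      by (simp only: jt_Suc[OF x]) (simp add: norm_mult norm_power)
    also have "\<dots> \<le> norm (jt x z (int n)) * (1/2)"
      by (rule mult_left_mono[OF b]) simp
    finally show "norm (norm (jt x z (int (Suc n)))) \<le> 1 / 2 * norm (norm (jt x z (int n)))"
      by simp
  qed simp
qed

lemma gb_sym:
  fixes x :: "'a::{real_normed_field, banach}"
  assumes "norm x < 1" "k \<le> M"
  shows "gb x M k = gb x M (M - k)"
proof -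
  have a: "gb x M k * (qpoch x k * qpoch x (M - k)) = qpoch x M"
    using gb_closed[OF assms(2)] by (simp add: mult.assoc)
  have b: "gb x M (M - k) * (qpoch x k * qpoch x (M - k)) = qpoch x M"
    using gb_closed[of "M - k" M x] assms(2) by (simp add: mult_ac)
  have "qpoch x k * qpoch x (M - k) \<noteq> 0" using qpoch_nz[OF assms(1)] by simp
  then show ?thesis using a b by (metis mult_right_cancel)
qed

lemma sum_split_center:
  fixes g :: "nat \<Rightarrow> 'a::comm_monoid_add"
  shows "(\<Sum>k\<le>2*N. g k) = (\<Sum>i\<le>N. g (N + i)) + (\<Sum>i<N. g (N - Suc i))"
proof -
  have U: "{..2*N} = {..<N} \<union> {N..N+N}" by auto
  have "(\<Sum>k\<le>2*N. g k) = sum g {..<N} + sum g {N..N+N}"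
    unfolding U by (rule sum.union_disjoint) auto
  also have "sum g {N..N+N} = (\<Sum>i\<le>N. g (N + i))"
    using sum.shift_bounds_cl_nat_ivl[of g 0 N N] by (simp add: atLeast0AtMost add.commute)
  also have "sum g {..<N} = (\<Sum>i<N. g (N - Suc i))"
    by (rule sum.nat_diff_reindex[symmetric])
  finally show ?thesis by (simp add: add.commute)
qed

lemma has_sum_int_split:
  fixes f :: "int \<Rightarrow> complex"
  assumes s1: "summable (\<lambda>n. norm (f (int n)))" and s2: "summable (\<lambda>n. norm (f (- int n - 1)))"
  shows "(f has_sum ((\<Sum>n. f (int n)) + (\<Sum>n. f (- int n - 1)))) UNIV"
proof -
  have h1: "((\<lambda>n. f (int n)) has_sum (\<Sum>n. f (int n))) UNIV"
    by (rule norm_summable_imp_has_sum[OF s1]) (rule summable_sums[OF summable_norm_cancel[OF s1]])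
  have h2: "((\<lambda>n. f (- int n - 1)) has_sum (\<Sum>n. f (- int n - 1))) UNIV"
    by (rule norm_summable_imp_has_sum[OF s2]) (rule summable_sums[OF summable_norm_cancel[OF s2]])
  have i1: "inj (int)" by (simp add: inj_on_def)
  have i2: "inj (\<lambda>n::nat. - int n - 1)" by (simp add: inj_on_def)
  have g1: "(f has_sum (\<Sum>n. f (int n))) (range int)"
    using has_sum_reindex[OF i1, of f] h1 by (simp add: comp_def)
  have g2: "(f has_sum (\<Sum>n. f (- int n - 1))) (range (\<lambda>n::nat. - int n - 1))"
    using has_sum_reindex[OF i2, of f] h2 by (simp add: comp_def)
  have U: "range int \<union> range (\<lambda>n::nat. - int n - 1) = UNIV"
  proof (intro set_eqI iffI)
    fix m :: int
    show "m \<in> range int \<union> range (\<lambda>n::nat. - int n - 1)"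
    proof (cases "m \<ge> 0")
      case True then have "m = int (nat m)" by simp
      then show ?thesis by blast
    next
      case False then have "m = - int (nat (- m - 1)) - 1" by simp
      then show ?thesis by blast
    qed
  qed simp
  have D: "range int \<inter> range (\<lambda>n::nat. - int n - 1) = {}" by auto
  show ?thesis using has_sum_Un_disjoint[OF g1 g2 D] unfolding U .
qed

lemma jprod_conv:
  fixes x z :: complex
  assumes xl: "norm x < 1" and z: "z \<noteq> 0"
  shows "convergent_prod (\<lambda>j. (1 + z * x ^ j) * (1 + x ^ Suc j / z))"
proof -
  define K where "K = norm z + norm x / norm z + norm x"
  have le: "norm ((1 + z * x ^ j) * (1 + x ^ Suc j / z) - 1) \<le> K * norm x ^ j" for j
  proof -
    have e: "(1 + z * x ^ j) * (1 + x ^ Suc j / z) - 1 = z * x ^ j + x ^ Suc j / z + x ^ j * x ^ Suc j"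
      using z by (simp add: field_simps)
    have r1: "norm x ^ j \<le> 1" using xl by (simp add: power_le_one less_imp_le)
    have "norm ((1 + z * x ^ j) * (1 + x ^ Suc j / z) - 1) \<le> norm (z * x ^ j) + norm (x ^ Suc j / z) + norm (x ^ j * x ^ Suc j)"
      unfolding e by (rule order_trans[OF norm_triangle_ineq add_right_mono[OF norm_triangle_ineq]])
    also have "\<dots> = norm z * norm x ^ j + norm x * norm x ^ j / norm z + norm x ^ j * (norm x * norm x ^ j)"
      by (simp add: norm_mult norm_power norm_divide)
    also have "\<dots> \<le> norm z * norm x ^ j + norm x * norm x ^ j / norm z + 1 * (norm x * norm x ^ j)"
      by (intro add_left_mono mult_right_mono r1) simp
    also have "\<dots> = K * norm x ^ j" unfolding K_def by (simp add: field_simps)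
    finally show ?thesis .
  qed
  have "summable (\<lambda>j. K * norm x ^ j)"
    by (rule summable_mult) (simp add: summable_geometric xl)
  then have "summable (\<lambda>j. norm ((1 + z * x ^ j) * (1 + x ^ Suc j / z) - 1))"
    by (rule summable_comparison_test[rotated]) (use le in auto)
  then show ?thesis
    by (intro abs_convergent_prod_imp_convergent_prod summable_imp_abs_convergent_prod)
qed

theorem jtp:
  fixes x z :: complex
  assumes x: "x \<noteq> 0" and xl: "norm x < 1" and z: "z \<noteq> 0"
  shows "(jt x z has_sum ((\<Prod>j. 1 - x ^ Suc j) * (\<Prod>j. (1 + z * x ^ j) * (1 + x ^ Suc j / z)))) UNIV"
proof -
  define P where "P = (\<Prod>j. 1 - x ^ Suc j)"
  define Q where "Q = (\<Prod>j. (1 + z * x ^ j) * (1 + x ^ Suc j / z))"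
  define C where "C = 1 / (\<Prod>j. 1 - norm x ^ Suc j)"
  have P0: "P \<noteq> 0" unfolding P_def by (rule qinf_nz[OF xl])
  have C0: "0 \<le> C" unfolding C_def using qinf_real_pos[of "norm x"] xl by simp
  have gbC: "norm (gb x M k) \<le> C" for M k
    unfolding C_def using gb_norm_le[of x M k] gb_real_bound[of "norm x" M k] xl by simp
  have xz: "x / z \<noteq> 0" using x z by simp
  have negeq: "jt x z (- int i - 1) = jt x (x / z) (int (Suc i))" for i
  proof -
    have "- int i - 1 = - (int i + 1)" "int (Suc i) = int i + 1" by simp_all
    then show ?thesis using jt_neg[OF x z, of "int i + 1"] by metis
  qed
  have s1: "summable (\<lambda>i. norm (jt x z (int i)))" by (rule jt_summable[OF x xl])
  have s2: "summable (\<lambda>i. norm (jt x z (- int i - 1)))"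
    unfolding negeq using jt_summable[OF x xl, of "x / z"]
    by (subst summable_Suc_iff[where f = "\<lambda>i. norm (jt x (x / z) (int i))"])
  define a where "a i N = (if i \<le> N then gb x (2*N) (N + i) * jt x z (int i) else 0)" for i N
  define b where "b i N = (if i < N then gb x (2*N) (N - Suc i) * jt x z (- int i - 1) else 0)" for i N
  have TA: "(\<lambda>N. \<Sum>i. a i N) \<longlonglongrightarrow> (\<Sum>i. 1 / P * jt x z (int i))"
  proof (rule conjunct2[OF conjunct2[OF tannerys_theorem]])
    show "(\<lambda>N. a i N) \<longlonglongrightarrow> 1 / P * jt x z (int i)" for i
    proof -
      have "(\<lambda>N. gb x (2*N) (N + i) * jt x z (int i)) \<longlonglongrightarrow> 1 / P * jt x z (int i)"
        unfolding P_def by (intro tendsto_mult_right gb_lim xl)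
      moreover have "eventually (\<lambda>N. gb x (2*N) (N + i) * jt x z (int i) = a i N) sequentially"
        using eventually_ge_at_top[of i] by eventually_elim (simp add: a_def)
      ultimately show ?thesis by (rule Lim_transform_eventually)
    qed
    show "eventually (\<lambda>(i, N). norm (a i N) \<le> C * norm (jt x z (int i))) (at_top \<times>\<^sub>F sequentially)"
      by (rule always_eventually)
         (auto simp: a_def norm_mult C0 intro!: mult_right_mono gbC)
    show "summable (\<lambda>i. C * norm (jt x z (int i)))" by (rule summable_mult[OF s1])
  qed simp
  have TB: "(\<lambda>N. \<Sum>i. b i N) \<longlonglongrightarrow> (\<Sum>i. 1 / P * jt x z (- int i - 1))"
  proof (rule conjunct2[OF conjunct2[OF tannerys_theorem]])
    show "(\<lambda>N. b i N) \<longlonglongrightarrow> 1 / P * jt x z (- int i - 1)" for i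
    proof -
      have "(\<lambda>N. gb x (2*N) (N + Suc i) * jt x z (- int i - 1)) \<longlonglongrightarrow> 1 / P * jt x z (- int i - 1)"
        unfolding P_def by (intro tendsto_mult_right gb_lim xl)
      moreover have "eventually (\<lambda>N. gb x (2*N) (N + Suc i) * jt x z (- int i - 1) = b i N) sequentially"
        using eventually_ge_at_top[of "Suc i"]
      proof eventually_elim
        case (elim N)
        then have "gb x (2*N) (N - Suc i) = gb x (2*N) (2*N - (N - Suc i))"
          by (intro gb_sym xl) simp
        also have "2*N - (N - Suc i) = N + Suc i" using elim by simp
        finally show ?case using elim by (simp add: b_def)
      qed
      ultimately show ?thesis by (rule Lim_transform_eventually)
    qed
    show "eventually (\<lambda>(i, N). norm (b i N) \<le> C * norm (jt x z (- int i - 1))) (at_top \<times>\<^sub>F sequentially)"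
      by (rule always_eventually)
         (auto simp: b_def norm_mult C0 intro!: mult_right_mono gbC)
    show "summable (\<lambda>i. C * norm (jt x z (- int i - 1)))" by (rule summable_mult[OF s2])
  qed simp
  have fin: "(\<Prod>j<N. (1 + z * x ^ j) * (1 + x ^ Suc j / z)) = (\<Sum>i. a i N) + (\<Sum>i. b i N)" for N
  proof -
    define g where "g k = gb x (2*N) k * jt x z (int k - int N)" for k
    have "(\<Prod>j<N. (1 + z * x ^ j) * (1 + x ^ Suc j / z)) = (\<Sum>k\<le>2*N. g k)"
      unfolding finite_jtp[OF x z] g_def jt_def ..
    also have "\<dots> = (\<Sum>i\<le>N. g (N + i)) + (\<Sum>i<N. g (N - Suc i))"
      by (rule sum_split_center)
    also have "(\<Sum>i\<le>N. g (N + i)) = (\<Sum>i. a i N)"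
    proof -
      have "(\<lambda>i. if i \<in> {..N} then g (N + i) else 0) sums (\<Sum>i\<le>N. g (N + i))"
        by (rule sums_If_finite_set) simp
      moreover have "(\<lambda>i. if i \<in> {..N} then g (N + i) else 0) = (\<lambda>i. a i N)"
        by (auto simp: a_def g_def)
      ultimately show ?thesis by (simp add: sums_iff)
    qed
    also have "(\<Sum>i<N. g (N - Suc i)) = (\<Sum>i. b i N)"
    proof -
      have "(\<lambda>i. if i \<in> {..<N} then g (N - Suc i) else 0) sums (\<Sum>i<N. g (N - Suc i))"
        by (rule sums_If_finite_set) simp
      moreover have "(\<lambda>i. if i \<in> {..<N} then g (N - Suc i) else 0) = (\<lambda>i. b i N)"
      proof
        fix i show "(if i \<in> {..<N} then g (N - Suc i) else 0) = b i N"
        proof (cases "i < N")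
          case True
          have e: "int (N - Suc i) - int N = - int i - 1" using True by simp
          show ?thesis using True unfolding b_def g_def e by simp
        qed (simp add: b_def)
      qed
      ultimately show ?thesis by (simp add: sums_iff)
    qed
    finally show ?thesis .
  qed
  have conv: "convergent_prod (\<lambda>j. (1 + z * x ^ j) * (1 + x ^ Suc j / z))"
    by (rule jprod_conv[OF xl z])
  have LQ: "(\<lambda>N. \<Prod>j<N. (1 + z * x ^ j) * (1 + x ^ Suc j / z)) \<longlonglongrightarrow> Q"
  proof -
    have "(\<lambda>n. \<Prod>j\<le>n. (1 + z * x ^ j) * (1 + x ^ Suc j / z)) \<longlonglongrightarrow> Q"
      unfolding Q_def by (rule convergent_prod_LIMSEQ[OF conv])
    then have "(\<lambda>n. \<Prod>j<Suc n. (1 + z * x ^ j) * (1 + x ^ Suc j / z)) \<longlonglongrightarrow> Q"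
      by (simp add: lessThan_Suc_atMost)
    then show ?thesis by (rule LIMSEQ_imp_Suc)
  qed
  have "(\<lambda>N. \<Prod>j<N. (1 + z * x ^ j) * (1 + x ^ Suc j / z)) \<longlonglongrightarrow>
          (\<Sum>i. 1 / P * jt x z (int i)) + (\<Sum>i. 1 / P * jt x z (- int i - 1))"
    unfolding fin by (rule tendsto_add[OF TA TB])
  then have QE: "Q = (\<Sum>i. 1 / P * jt x z (int i)) + (\<Sum>i. 1 / P * jt x z (- int i - 1))"
    using LQ LIMSEQ_unique by blast
  have e1: "(\<Sum>i. 1 / P * jt x z (int i)) = 1 / P * (\<Sum>i. jt x z (int i))"
    by (rule suminf_mult[OF summable_norm_cancel[OF s1]])
  have e2: "(\<Sum>i. 1 / P * jt x z (- int i - 1)) = 1 / P * (\<Sum>i. jt x z (- int i - 1))"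
    by (rule suminf_mult[OF summable_norm_cancel[OF s2]])
  have "(\<Sum>n. jt x z (int n)) + (\<Sum>n. jt x z (- int n - 1)) = P * Q"
    unfolding QE e1 e2 using P0 by (simp add: field_simps)
  then show ?thesis using has_sum_int_split[OF s1 s2] unfolding P_def Q_def by simp
qed

definition Pm :: "complex \<Rightarrow> nat \<Rightarrow> nat \<Rightarrow> complex" where
  "Pm q a m = (\<Prod>n. 1 - q ^ (m * n + a))"

definition Pp :: "complex \<Rightarrow> nat \<Rightarrow> nat \<Rightarrow> complex" where
  "Pp q a m = (\<Prod>n. 1 + q ^ (m * n + a))"

lemma gen_conv:
  fixes q c :: complex
  assumes q: "norm q < 1" and e: "\<And>n. n \<le> e n"
  shows "convergent_prod (\<lambda>n. 1 + c * q ^ e n)"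
proof -
  have le: "norm ((1 + c * q ^ e n) - 1) \<le> norm c * norm q ^ n" for n
  proof -
    have "norm q ^ e n \<le> norm q ^ n"
      by (rule power_decreasing[OF e]) (use q in auto)
    then show ?thesis by (simp add: norm_mult norm_power mult_left_mono)
  qed
  have "summable (\<lambda>n. norm c * norm q ^ n)"
    by (rule summable_mult) (simp add: summable_geometric q)
  then have "summable (\<lambda>n. norm ((1 + c * q ^ e n) - 1))"
    by (rule summable_comparison_test[rotated]) (use le in auto)
  then show ?thesis
    by (intro abs_convergent_prod_imp_convergent_prod summable_imp_abs_convergent_prod)
qed

lemma pow_norm_lt1:
  fixes q :: complex
  assumes q: "norm q < 1" and "k > 0"
  shows "norm (q ^ k) < 1"
proof -
  have "norm q ^ k < 1" using q assms(2) by (simp add: power_less_one_iff)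
  then show ?thesis by (simp add: norm_power)
qed

lemma Pm_conv:
  fixes q :: complex
  assumes q: "norm q < 1" and m: "m > 0"
  shows "convergent_prod (\<lambda>n. 1 - q ^ (m * n + a))"
  using gen_conv[OF q, of "\<lambda>n. m * n + a" "-1"] m by (simp add: trans_le_add1)

lemma Pp_conv:
  fixes q :: complex
  assumes q: "norm q < 1" and m: "m > 0"
  shows "convergent_prod (\<lambda>n. 1 + q ^ (m * n + a))"
  using gen_conv[OF q, of "\<lambda>n. m * n + a" "1"] m by (simp add: trans_le_add1)

lemma Pm_fac_nz:
  fixes q :: complex
  assumes q: "norm q < 1" and a: "a > 0"
  shows "1 - q ^ (m * n + a) \<noteq> 0"
proof
  assume "1 - q ^ (m * n + a) = 0"
  then have "norm (q ^ (m * n + a)) = 1" by (metis eq_iff_diff_eq_0 norm_one)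
  with pow_norm_lt1[OF q, of "m * n + a"] a show False by simp
qed

lemma Pp_fac_nz:
  fixes q :: complex
  assumes q: "norm q < 1" and a: "a > 0"
  shows "1 + q ^ (m * n + a) \<noteq> 0"
proof
  assume "1 + q ^ (m * n + a) = 0"
  then have "q ^ (m * n + a) = -1" by (simp add: add_eq_0_iff)
  then have "norm (q ^ (m * n + a)) = 1" by simp
  with pow_norm_lt1[OF q, of "m * n + a"] a show False by simp
qed

lemma Pm_nz:
  assumes q: "norm q < 1" and m: "m > 0" and a: "a > 0"
  shows "Pm q a m \<noteq> 0"
  unfolding Pm_def by (rule prodinf_nonzero[OF Pm_conv[OF q m] Pm_fac_nz[OF q a]])

lemma Pp_nz:
  assumes q: "norm q < 1" and m: "m > 0" and a: "a > 0"
  shows "Pp q a m \<noteq> 0"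
  unfolding Pp_def by (rule prodinf_nonzero[OF Pp_conv[OF q m] Pp_fac_nz[OF q a]])

lemma Pp_Pm:
  assumes q: "norm q < 1" and m: "m > 0"
  shows "Pp q a m * Pm q a m = Pm q (2 * a) (2 * m)"
proof -
  have "Pp q a m * Pm q a m = (\<Prod>n. (1 + q ^ (m * n + a)) * (1 - q ^ (m * n + a)))"
    unfolding Pp_def Pm_def by (rule prodinf_mult[OF Pp_conv[OF q m] Pm_conv[OF q m]])
  also have "\<dots> = Pm q (2 * a) (2 * m)"
    unfolding Pm_def
  proof (rule prodinf_cong)
    fix n
    have "q ^ (2 * m * n + 2 * a) = q ^ (m * n + a) * q ^ (m * n + a)"
    proof -
      have "2 * m * n + 2 * a = (m * n + a) + (m * n + a)" by simp
      then show ?thesis by (simp only: power_add)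
    qed
    then show "(1 + q ^ (m * n + a)) * (1 - q ^ (m * n + a)) = 1 - q ^ (2 * m * n + 2 * a)"
      by (simp only: ring_distribs) simp
  qed
  finally show ?thesis .
qed

lemma prod_block:
  fixes g :: "nat \<Rightarrow> 'a::comm_monoid_mult"
  shows "(\<Prod>n<k * N. g n) = (\<Prod>r<k. \<Prod>j<N. g (k * j + r))"
proof -
  have "(\<Prod>n<k * N. g n) = (\<Prod>j<N. \<Prod>r<k. g (k * j + r))"
  proof (induction N)
    case 0 then show ?case by simp
  next
    case (Suc N)
    have "(\<Prod>n<k * Suc N. g n) = (\<Prod>n<k * N + k. g n)" by (simp add: add.commute)
    also have "\<dots> = (\<Prod>n<k * N. g n) * (\<Prod>r<k. g (k * N + r))" by (rule prod_split_add)
    finally show ?case using Suc by simp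
  qed
  also have "\<dots> = (\<Prod>r<k. \<Prod>j<N. g (k * j + r))" by (rule prod.swap)
  finally show ?thesis .
qed

lemma prod_lim_lessThan:
  fixes f :: "nat \<Rightarrow> complex"
  assumes "convergent_prod f"
  shows "(\<lambda>N. \<Prod>n<N. f n) \<longlonglongrightarrow> prodinf f"
proof -
  have "(\<lambda>n. \<Prod>j\<le>n. f j) \<longlonglongrightarrow> prodinf f" by (rule convergent_prod_LIMSEQ[OF assms])
  then have "(\<lambda>n. \<Prod>j<Suc n. f j) \<longlonglongrightarrow> prodinf f" by (simp add: lessThan_Suc_atMost)
  then show ?thesis by (rule LIMSEQ_imp_Suc)
qed

lemma Pm_split:
  assumes q: "norm q < 1" and m: "m > 0" and k: "k > 0"
  shows "Pm q a m = (\<Prod>r<k. Pm q (a + m * r) (m * k))"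
proof -
  define g where "g n = 1 - q ^ (m * n + a)" for n
  have L1: "(\<lambda>N. \<Prod>n<k * N. g n) \<longlonglongrightarrow> Pm q a m"
  proof -
    have "(\<lambda>N. \<Prod>n<N. g n) \<longlonglongrightarrow> Pm q a m"
      unfolding g_def Pm_def by (rule prod_lim_lessThan[OF Pm_conv[OF q m]])
    moreover have "filterlim (\<lambda>N. k * N) at_top sequentially"
      using k by (intro filterlim_subseq) (simp add: strict_mono_def)
    ultimately show ?thesis by (rule filterlim_compose)
  qed
  have L2: "(\<lambda>N. \<Prod>r<k. \<Prod>j<N. g (k * j + r)) \<longlonglongrightarrow> (\<Prod>r<k. Pm q (a + m * r) (m * k))"
  proof (intro tendsto_prod)
    fix r
    have e: "g (k * j + r) = 1 - q ^ (m * k * j + (a + m * r))" for j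
      unfolding g_def by (simp add: algebra_simps)
    show "(\<lambda>N. \<Prod>j<N. g (k * j + r)) \<longlonglongrightarrow> Pm q (a + m * r) (m * k)"
      unfolding e Pm_def by (rule prod_lim_lessThan[OF Pm_conv[OF q]]) (use m k in simp)
  qed
  show ?thesis using L1 L2 unfolding prod_block by (rule LIMSEQ_unique)
qed

lemma tr_nonneg: "0 \<le> tr n"
proof -
  have "0 \<le> n * (n - 1)"
  proof (cases "n \<ge> 1")
    case True then show ?thesis by simp
  next
    case False then have "n \<le> 0" by simp
    then show ?thesis by (intro mult_nonpos_nonpos) auto
  qed
  then have "0 \<le> 2 * tr n" by (simp only: two_tr)
  then show ?thesis by simp
qed

lemma expo_nonneg:
  assumes "b \<le> a"
  shows "0 \<le> int a * tr n + int b * n"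
proof (cases "n \<ge> 0")
  case True then show ?thesis using tr_nonneg[of n] by simp
next
  case False
  have "int b * tr n \<le> int a * tr n" using assms tr_nonneg[of n] by (intro mult_right_mono) auto
  moreover have "int b * tr n + int b * n = int b * tr (- n)" by (simp add: tr_neg algebra_simps)
  moreover have "0 \<le> int b * tr (- n)" using tr_nonneg[of "- n"] by simp
  ultimately show ?thesis by linarith
qed

lemma jt_pow:
  fixes q c :: complex
  assumes q: "q \<noteq> 0" and c: "c \<noteq> 0" and ba: "b \<le> a"
  shows "jt (q ^ a) (c * q ^ b) n = c powi n * q ^ nat (int a * tr n + int b * n)"
proof -
  have "jt (q ^ a) (c * q ^ b) n = c powi n * (q powi (int a * tr n) * q powi (int b * n))"
  proof -
    have s1: "(q ^ a) powi tr n = q powi (int a * tr n)" by (simp only: power_int_mult power_int_of_nat)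
    have s2: "(q ^ b) powi n = q powi (int b * n)" by (simp only: power_int_mult power_int_of_nat)
    show ?thesis unfolding jt_def power_int_mult_distrib s1 s2 by (simp only: mult_ac)
  qed
  also have "q powi (int a * tr n) * q powi (int b * n) = q powi (int a * tr n + int b * n)"
    using q by (simp add: power_int_add)
  also have "\<dots> = q ^ nat (int a * tr n + int b * n)"
    using expo_nonneg[OF ba, of n] by (metis int_nat_eq power_int_of_nat)
  finally show ?thesis .
qed

lemma jtp_gen:
  fixes q c :: complex
  assumes q: "q \<noteq> 0" "norm q < 1" and a: "0 < a" and ba: "b \<le> a" and c: "c = 1 \<or> c = -1"
  shows "((\<lambda>n. c powi n * q ^ nat (int a * tr n + int b * n)) has_sum
           (Pm q a a * (\<Prod>j. (1 + c * q ^ (a * j + b)) * (1 + c * q ^ (a * j + (a - b)))))) UNIV"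
proof -
  have c0: "c \<noteq> 0" and cc: "c * c = 1" using c by auto
  have x: "q ^ a \<noteq> 0" using q by simp
  have xl: "norm (q ^ a) < 1" by (rule pow_norm_lt1[OF q(2) a])
  have z: "c * q ^ b \<noteq> 0" using q c0 by simp
  have h: "(jt (q ^ a) (c * q ^ b) has_sum ((\<Prod>j. 1 - (q ^ a) ^ Suc j) *
      (\<Prod>j. (1 + c * q ^ b * (q ^ a) ^ j) * (1 + (q ^ a) ^ Suc j / (c * q ^ b))))) UNIV"
    by (rule jtp[OF x xl z])
  have e1: "(\<Prod>j. 1 - (q ^ a) ^ Suc j) = Pm q a a"
    unfolding Pm_def by (rule prodinf_cong) (simp only: power_mult[symmetric] mult_Suc_right add.commute)
  have e2: "(1 + c * q ^ b * (q ^ a) ^ j) * (1 + (q ^ a) ^ Suc j / (c * q ^ b))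
          = (1 + c * q ^ (a * j + b)) * (1 + c * q ^ (a * j + (a - b)))" for j
  proof -
    have p1: "c * q ^ b * (q ^ a) ^ j = c * q ^ (a * j + b)"
      by (simp add: power_mult[symmetric] power_add mult_ac)
    have r0: "(q ^ a) ^ Suc j = q ^ (a * j + a)" by (simp only: power_mult[symmetric] mult_Suc_right add.commute)
    have "q ^ (a * j + a) = q ^ (a * j + (a - b)) * q ^ b"
      using ba by (simp add: power_add[symmetric])
    then have r1: "(q ^ a) ^ Suc j = q ^ (a * j + (a - b)) * q ^ b" using r0 by simp
    have "(q ^ a) ^ Suc j / (c * q ^ b) = q ^ (a * j + (a - b)) / c"
      unfolding r1 using q c0 by (simp add: field_simps)
    also have "\<dots> = c * q ^ (a * j + (a - b))"
      using cc c0 by (simp add: field_simps)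
    finally have p2: "(q ^ a) ^ Suc j / (c * q ^ b) = c * q ^ (a * j + (a - b))" .
    show ?thesis by (simp only: p1 p2)
  qed
  have fe: "jt (q ^ a) (c * q ^ b) = (\<lambda>n. c powi n * q ^ nat (int a * tr n + int b * n))"
    by (rule ext) (rule jt_pow[OF q(1) c0 ba])
  show ?thesis using h unfolding e1 e2 fe .
qed

lemma jtp_minus:
  fixes q :: complex
  assumes q: "q \<noteq> 0" "norm q < 1" and b: "0 < b" "b < a"
  shows "((\<lambda>n. (-1) powi n * q ^ nat (int a * tr n + int b * n)) has_sum
           (Pm q a a * (Pm q b a * Pm q (a - b) a))) UNIV"
proof -
  have a: "0 < a" using b by simp
  have "(\<Prod>j. (1 + (-1) * q ^ (a * j + b)) * (1 + (-1) * q ^ (a * j + (a - b)))) = Pm q b a * Pm q (a - b) a"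
    unfolding Pm_def using prodinf_mult[OF Pm_conv[OF q(2) a, of b] Pm_conv[OF q(2) a, of "a - b"]]
    by simp
  then show ?thesis using jtp_gen[OF q a _, of b "-1"] b by simp
qed

lemma jtp_plus:
  fixes q :: complex
  assumes q: "q \<noteq> 0" "norm q < 1" and b: "0 < b" "b < a"
  shows "((\<lambda>n. q ^ nat (int a * tr n + int b * n)) has_sum
           (Pm q a a * (Pp q b a * Pp q (a - b) a))) UNIV"
proof -
  have a: "0 < a" using b by simp
  have "(\<Prod>j. (1 + 1 * q ^ (a * j + b)) * (1 + 1 * q ^ (a * j + (a - b)))) = Pp q b a * Pp q (a - b) a"
    unfolding Pp_def using prodinf_mult[OF Pp_conv[OF q(2) a, of b] Pp_conv[OF q(2) a, of "a - b"]]
    by simp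
  then show ?thesis using jtp_gen[OF q a _, of b 1] b by simp
qed

lemma jtp_plus_eq:
  fixes q :: complex
  assumes q: "q \<noteq> 0" "norm q < 1" and a: "0 < a"
  shows "((\<lambda>n. q ^ nat (int a * tr n + int a * n)) has_sum
           (2 * Pm q a a * Pp q a a ^ 2)) UNIV"
proof -
  have f: "(\<Prod>j. 1 + q ^ (a * j + 0)) = 2 * Pp q a a"
  proof -
    have "(\<Prod>j. 1 + q ^ (a * Suc j + 0)) = (\<Prod>j. 1 + q ^ (a * j + 0)) / (1 + q ^ (a * 0 + 0))"
      by (rule prodinf_split_head[OF Pp_conv[OF q(2) a]]) simp
    moreover have "(\<Prod>j. 1 + q ^ (a * Suc j + 0)) = Pp q a a"
      unfolding Pp_def by (simp add: algebra_simps)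
    ultimately show ?thesis by (simp add: mult.commute)
  qed
  have "(\<Prod>j. (1 + 1 * q ^ (a * j + a)) * (1 + 1 * q ^ (a * j + (a - a)))) = Pp q a a * (2 * Pp q a a)"
    unfolding f[symmetric] unfolding Pp_def using prodinf_mult[OF Pp_conv[OF q(2) a, of a] Pp_conv[OF q(2) a, of 0]]
    by simp
  then show ?thesis using jtp_gen[OF q a _, of a 1] by (simp add: power2_eq_square mult_ac)
qed

lemma has_sum_prod2:
  fixes f g :: "int \<Rightarrow> complex"
  assumes F: "(f has_sum SF) UNIV" and G: "(g has_sum SG) UNIV"
  shows "((\<lambda>(m, n). f m * g n) has_sum (SF * SG)) UNIV"
proof -
  have af: "(\<lambda>m. norm (f m)) summable_on UNIV"
    using F summable_on_iff_abs_summable_on_complex has_sum_imp_summable by blast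
  have ag: "(\<lambda>n. norm (g n)) summable_on UNIV"
    using G summable_on_iff_abs_summable_on_complex has_sum_imp_summable by blast
  define NG where "NG = infsum (\<lambda>n. norm (g n)) UNIV"
  have "(\<lambda>(m, n). norm (f m) * norm (g n)) summable_on Sigma UNIV (\<lambda>_. UNIV)"
  proof (rule summable_on_SigmaI)
    show "((\<lambda>n. (\<lambda>(m, n). norm (f m) * norm (g n)) (m, n)) has_sum (norm (f m) * NG)) UNIV" for m
      unfolding NG_def by (simp add: has_sum_cmult_right ag)
    show "(\<lambda>m. norm (f m) * NG) summable_on UNIV"
      by (intro summable_on_cmult_left af)
  qed auto
  moreover have "(\<lambda>p. norm ((\<lambda>(m, n). f m * g n) p)) = (\<lambda>(m, n). norm (f m) * norm (g n))"
    by (rule ext) (auto simp: norm_mult split: prod.splits)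
  ultimately have "(\<lambda>p. norm ((\<lambda>(m, n). f m * g n) p)) summable_on UNIV"
    by simp
  then have sm: "(\<lambda>(m, n). f m * g n) summable_on Sigma UNIV (\<lambda>_. UNIV)"
    using summable_on_iff_abs_summable_on_complex by auto
  have "((\<lambda>(m, n). f m * g n) has_sum (SF * SG)) (Sigma UNIV (\<lambda>_. UNIV))"
  proof (rule has_sum_SigmaI[OF _ _ sm])
    show "((\<lambda>n. (\<lambda>(m, n). f m * g n) (m, n)) has_sum (f m * SG)) UNIV" for m
      using has_sum_cmult_right[OF G, of "f m"] by simp
    show "((\<lambda>m. f m * SG) has_sum (SF * SG)) UNIV"
      by (rule has_sum_cmult_left[OF F])
  qed
  then show ?thesis by simp
qed

lemma has_sum_onto:
  fixes H :: "'a \<Rightarrow> complex"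
  assumes "inj \<phi>" "range \<phi> = A" "((\<lambda>p. H (\<phi> p)) has_sum s) UNIV"
  shows "(H has_sum s) A"
  using has_sum_reindex[OF assms(1), of H s] assms(2,3) by (simp add: comp_def)

definition sg :: "int \<Rightarrow> complex" where "sg n = (if even n then 1 else -1)"

lemma neg1_powi: "(-1::complex) powi n = sg n"
proof (cases "n \<ge> 0")
  case True
  then have "(-1::complex) powi n = (-1) ^ nat n" by (metis int_nat_eq power_int_of_nat)
  then show ?thesis using True by (simp add: sg_def even_nat_iff)
next
  case False
  then have "(-1::complex) powi n = inverse ((-1) ^ nat (- n))"
    by (metis int_nat_eq less_le_not_le nle_le neg_0_le_iff_le power_int_minus power_int_of_nat minus_minus)
  also have "\<dots> = (-1) ^ nat (- n)" by (metis inverse_minus_eq inverse_1 power_inverse)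
  finally show ?thesis using False by (simp add: sg_def even_nat_iff)
qed

lemma sg_mult: "sg (a + b) = sg a * sg b"
  by (simp add: sg_def)

lemma qpow_add:
  fixes q :: complex
  assumes "0 \<le> a" "0 \<le> b"
  shows "q ^ nat a * q ^ nat b = q ^ nat (a + b)"
  using assms by (simp add: power_add[symmetric] nat_add_distrib)

definition cls :: "int \<times> int \<Rightarrow> int" where "cls p = (fst p - 2 * snd p) mod 5"
definition Cl :: "int \<Rightarrow> (int \<times> int) set" where "Cl c = {p. cls p = c}"

lemma five_classes:
  fixes H :: "int \<times> int \<Rightarrow> complex"
  assumes "H summable_on UNIV"
  shows "infsum H UNIV = infsum H (Cl 0) + infsum H (Cl 1) + infsum H (Cl 2) + infsum H (Cl 3) + infsum H (Cl 4)"
proof -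
  have sm: "H summable_on A" for A using summable_on_subset_banach[OF assms] by blast
  have U: "UNIV = Cl 0 \<union> (Cl 1 \<union> (Cl 2 \<union> (Cl 3 \<union> Cl 4)))"
  proof -
    have "cls p \<in> {0, 1, 2, 3, 4}" for p
    proof -
      have "0 \<le> cls p" "cls p < 5" by (simp_all add: cls_def)
      then show ?thesis by auto
    qed
    then show ?thesis unfolding Cl_def by auto
  qed
  have "infsum H UNIV = infsum H (Cl 0 \<union> (Cl 1 \<union> (Cl 2 \<union> (Cl 3 \<union> Cl 4))))" using U by simp
  also have "\<dots> = infsum H (Cl 0) + (infsum H (Cl 1) + (infsum H (Cl 2) + (infsum H (Cl 3) + infsum H (Cl 4))))"
    by (subst infsum_Un_disjoint, (auto simp: sm Cl_def)[3])+ (rule refl)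
  finally show ?thesis by (simp add: add.assoc)
qed

lemma rot_infsum:
  fixes H :: "int \<times> int \<Rightarrow> complex"
  assumes "inj \<rho>" "\<And>p. H (\<rho> p) = H p" "\<rho> ` A = B"
  shows "infsum H B = infsum H A"
  using infsum_reindex[of \<rho> A H] assms by (simp add: comp_def inj_on_subset[OF assms(1)])

lemma quad_nonneg: "0 \<le> c \<Longrightarrow> c \<le> 5 \<Longrightarrow> 0 \<le> 5 * k^2 - c * (k::int)"
proof -
  assume c: "0 \<le> c" "c \<le> 5"
  have "0 \<le> k * (5 * k - c)"
  proof (cases "k \<ge> 1")
    case True then show ?thesis using c by (intro mult_nonneg_nonneg) auto
  next
    case False then show ?thesis using c by (intro mult_nonpos_nonpos) auto
  qed
  then show ?thesis by (simp add: power2_eq_square algebra_simps)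
qed

lemma sg_eq: "even (a - b) \<Longrightarrow> sg a = sg b"
  unfolding sg_def by auto

lemma sg_eq_neg: "odd (a - b) \<Longrightarrow> sg a = - sg b"
  unfolding sg_def by auto

lemma sg_eq2: "a - b = 2 * t \<Longrightarrow> sg a = sg b"
  by (rule sg_eq) simp

lemma sg_eq_neg2: "a - b = 2 * t + 1 \<Longrightarrow> sg a = - sg b"
  by (rule sg_eq_neg) simp

lemma mod5_shift: "(a + 5 * y) mod 5 = (a::int) mod 5"
  by simp

lemma mod5_lin:
  assumes "(x::int) mod 5 = c"
  shows "(a * x + b + 5 * y) mod 5 = (a * c + b) mod 5"
proof -
  have "(a * x + b + 5 * y) mod 5 = (a * x + b) mod 5" by (rule mod5_shift)
  also have "\<dots> = ((a * x) mod 5 + b) mod 5" by (rule mod_add_left_eq[symmetric])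
  also have "(a * x) mod 5 = (a * (x mod 5)) mod 5" by (rule mod_mult_right_eq[symmetric])
  also have "((a * (x mod 5)) mod 5 + b) mod 5 = (a * (x mod 5) + b) mod 5" by (rule mod_add_left_eq)
  finally show ?thesis using assms by simp
qed

lemma mod5_decomp: "(x::int) mod 5 = r \<Longrightarrow> x = 5 * (x div 5) + r"
  using div_mult_mod_eq[of x 5] by simp

lemma mod5_small: "0 \<le> (c::int) \<Longrightarrow> c < 5 \<Longrightarrow> c mod 5 = c"
  by simp

context
  fixes q :: complex
  assumes q0: "q \<noteq> 0" and q1: "norm q < 1"
begin

definition "t1 n = sg n * q ^ nat (n^2)"
definition "t5 n = sg n * q ^ nat (5 * n^2)"
definition "g1 n = sg n * q ^ nat (5 * n^2 - 4 * n)"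
definition "g3 n = sg n * q ^ nat (5 * n^2 - 2 * n)"

lemma t1_sum: "(t1 has_sum (Pm q 2 2 * (Pm q 1 2 * Pm q 1 2))) UNIV"
proof -
  have "(\<lambda>n. (-1) powi n * q ^ nat (int 2 * tr n + int 1 * n)) = t1"
  proof
    fix n
    have eq: "int 2 * tr n + int 1 * n = n^2" using two_tr[of n] by (simp add: power2_eq_square algebra_simps)
    then show "(-1) powi n * q ^ nat (int 2 * tr n + int 1 * n) = t1 n" by (simp only: t1_def neg1_powi eq)
  qed
  then show ?thesis using jtp_minus[OF q0 q1, of 1 2] by simp
qed

lemma t5_sum: "(t5 has_sum (Pm q 10 10 * (Pm q 5 10 * Pm q 5 10))) UNIV"
proof -
  have "(\<lambda>n. (-1) powi n * q ^ nat (int 10 * tr n + int 5 * n)) = t5"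
  proof
    fix n
    have eq: "int 10 * tr n + int 5 * n = 5 * n^2" using two_tr[of n] by (simp add: power2_eq_square algebra_simps)
    then show "(-1) powi n * q ^ nat (int 10 * tr n + int 5 * n) = t5 n" by (simp only: t5_def neg1_powi eq)
  qed
  then show ?thesis using jtp_minus[OF q0 q1, of 5 10] by simp
qed

lemma g1_sum: "(g1 has_sum (Pm q 10 10 * (Pm q 1 10 * Pm q 9 10))) UNIV"
proof -
  have "(\<lambda>n. (-1) powi n * q ^ nat (int 10 * tr n + int 1 * n)) = g1"
  proof
    fix n
    have eq: "int 10 * tr n + int 1 * n = 5 * n^2 - 4 * n" using two_tr[of n] by (simp add: power2_eq_square algebra_simps)
    then show "(-1) powi n * q ^ nat (int 10 * tr n + int 1 * n) = g1 n" by (simp only: g1_def neg1_powi eq)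
  qed
  then show ?thesis using jtp_minus[OF q0 q1, of 1 10] by simp
qed

lemma g3_sum: "(g3 has_sum (Pm q 10 10 * (Pm q 3 10 * Pm q 7 10))) UNIV"
proof -
  have "(\<lambda>n. (-1) powi n * q ^ nat (int 10 * tr n + int 3 * n)) = g3"
  proof
    fix n
    have eq: "int 10 * tr n + int 3 * n = 5 * n^2 - 2 * n" using two_tr[of n] by (simp add: power2_eq_square algebra_simps)
    then show "(-1) powi n * q ^ nat (int 10 * tr n + int 3 * n) = g3 n" by (simp only: g3_def neg1_powi eq)
  qed
  then show ?thesis using jtp_minus[OF q0 q1, of 3 10] by simp
qed

definition "H2 p = t1 (fst p) * t1 (snd p)"

lemma H2_alt: "H2 (m, n) = sg (m + n) * q ^ nat (m^2 + n^2)"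
  unfolding H2_def t1_def by (simp add: sg_mult qpow_add[symmetric])

lemma H2_sum: "(H2 has_sum (Pm q 2 2 * (Pm q 1 2 * Pm q 1 2))^2) UNIV"
proof -
  have "((\<lambda>(m, n). t1 m * t1 n) has_sum (Pm q 2 2 * (Pm q 1 2 * Pm q 1 2)) * (Pm q 2 2 * (Pm q 1 2 * Pm q 1 2))) UNIV"
    by (rule has_sum_prod2[OF t1_sum t1_sum])
  moreover have "(\<lambda>(m, n). t1 m * t1 n) = H2" by (auto simp: H2_def)
  ultimately show ?thesis by (simp add: power2_eq_square)
qed

lemma H2_C0: "(H2 has_sum (Pm q 10 10 * (Pm q 5 10 * Pm q 5 10))^2) (Cl 0)"
proof (rule has_sum_onto[where \<phi> = "\<lambda>(k, l). (2 * k + l, k - 2 * l)"])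
  show "inj (\<lambda>(k::int, l::int). (2 * k + l, k - 2 * l))"
    by (auto simp: inj_on_def)
  show "range (\<lambda>(k::int, l::int). (2 * k + l, k - 2 * l)) = Cl 0"
  proof (intro set_eqI iffI)
    fix p assume "p \<in> range (\<lambda>(k::int, l::int). (2 * k + l, k - 2 * l))"
    then show "p \<in> Cl 0" by (auto simp: Cl_def cls_def)
  next
    fix p assume "p \<in> Cl 0"
    then obtain m n where p: "p = (m, n)" and c: "(m - 2 * n) mod 5 = 0" by (cases p) (auto simp: Cl_def cls_def)
    define l where "l = (m - 2 * n) div 5"
    have "m = 5 * l + 2 * n" using mod5_decomp[OF c] unfolding l_def by linarith
    then have "p = (\<lambda>(k, l). (2 * k + l, k - 2 * l)) (2 * l + n, l)" using p by simp
    then show "p \<in> range (\<lambda>(k::int, l::int). (2 * k + l, k - 2 * l))" by blast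
  qed
  have "((\<lambda>(k, l). t5 k * t5 l) has_sum (Pm q 10 10 * (Pm q 5 10 * Pm q 5 10))^2) UNIV"
    using has_sum_prod2[OF t5_sum t5_sum] by (simp add: power2_eq_square)
  moreover have "(\<lambda>(k, l). t5 k * t5 l) = (\<lambda>p. H2 ((\<lambda>(k, l). (2 * k + l, k - 2 * l)) p))"
  proof (rule ext, clarify)
    fix k l :: int
    have "sg (2 * k + l + (k - 2 * l)) = sg (k + l)" by (rule sg_eq2[where t = "k - l"]) simp
    then have s: "sg (2 * k + l + (k - 2 * l)) = sg k * sg l" by (simp only: sg_mult)
    have e: "(2 * k + l)^2 + (k - 2 * l)^2 = 5 * k^2 + 5 * l^2" by (simp add: power2_eq_square algebra_simps)
    have qq: "q ^ nat (5 * k^2 + 5 * l^2) = q ^ nat (5 * k^2) * q ^ nat (5 * l^2)"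
      by (rule qpow_add[symmetric]) simp_all
    show "t5 k * t5 l = H2 (2 * k + l, k - 2 * l)"
      unfolding H2_alt t5_def s e qq by (simp only: mult_ac)
  qed
  ultimately show "((\<lambda>p. H2 ((\<lambda>(k, l). (2 * k + l, k - 2 * l)) p)) has_sum (Pm q 10 10 * (Pm q 5 10 * Pm q 5 10))^2) UNIV"
    by simp
qed

lemma H2_C4: "(H2 has_sum (- q * ((Pm q 10 10 * (Pm q 1 10 * Pm q 9 10)) * (Pm q 10 10 * (Pm q 3 10 * Pm q 7 10))))) (Cl 4)"
proof (rule has_sum_onto[where \<phi> = "\<lambda>(k, l). (2 * k + l - 1, k - 2 * l)"])
  show "inj (\<lambda>(k::int, l::int). (2 * k + l - 1, k - 2 * l))"
    by (auto simp: inj_on_def)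
  show "range (\<lambda>(k::int, l::int). (2 * k + l - 1, k - 2 * l)) = Cl 4"
  proof (intro set_eqI iffI)
    fix p assume "p \<in> range (\<lambda>(k::int, l::int). (2 * k + l - 1, k - 2 * l))"
    then obtain k l where p: "p = (2 * k + l - 1, k - 2 * l)" by auto
    have "(2 * k + l - 1 - 2 * (k - 2 * l)) = (-1) + 5 * l" by simp
    then have "(2 * k + l - 1 - 2 * (k - 2 * l)) mod 5 = (-1) mod 5" by (simp only: mod5_shift)
    then show "p \<in> Cl 4" using p by (simp add: Cl_def cls_def)
  next
    fix p assume "p \<in> Cl 4"
    then obtain m n where p: "p = (m, n)" and c: "(m - 2 * n) mod 5 = 4" by (cases p) (auto simp: Cl_def cls_def)
    define l where "l = (m - 2 * n) div 5 + 1"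
    have "m = 5 * l + 2 * n - 1" using mod5_decomp[OF c] unfolding l_def distrib_left by linarith
    then have "p = (\<lambda>(k, l). (2 * k + l - 1, k - 2 * l)) (2 * l + n, l)" using p by simp
    then show "p \<in> range (\<lambda>(k::int, l::int). (2 * k + l - 1, k - 2 * l))" by blast
  qed
  have "((\<lambda>(k, l). - q * (g1 k * g3 l)) has_sum (- q * ((Pm q 10 10 * (Pm q 1 10 * Pm q 9 10)) * (Pm q 10 10 * (Pm q 3 10 * Pm q 7 10))))) UNIV"
    using has_sum_cmult_right[OF has_sum_prod2[OF g1_sum g3_sum], of "- q"] by (simp add: case_prod_unfold)
  moreover have "(\<lambda>(k, l). - q * (g1 k * g3 l)) = (\<lambda>p. H2 ((\<lambda>(k, l). (2 * k + l - 1, k - 2 * l)) p))"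
  proof (rule ext, clarify)
    fix k l :: int
    have "sg (2 * k + l - 1 + (k - 2 * l)) = - sg (k + l)" by (rule sg_eq_neg2[where t = "k - l - 1"]) simp
    then have s: "sg (2 * k + l - 1 + (k - 2 * l)) = - (sg k * sg l)" by (simp only: sg_mult)
    have e: "(2 * k + l - 1)^2 + (k - 2 * l)^2 = 1 + (5 * k^2 - 4 * k) + (5 * l^2 - 2 * l)"
      by (simp add: power2_eq_square algebra_simps)
    have n1: "0 \<le> 5 * k^2 - 4 * k" by (rule quad_nonneg) auto
    have n2: "0 \<le> 5 * l^2 - 2 * l" by (rule quad_nonneg) auto
    have qq: "q ^ nat (1 + (5 * k^2 - 4 * k) + (5 * l^2 - 2 * l)) = q * (q ^ nat (5 * k^2 - 4 * k) * q ^ nat (5 * l^2 - 2 * l))"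
      using n1 n2 by (simp only: nat_add_distrib power_add) simp
    show "- q * (g1 k * g3 l) = H2 (2 * k + l - 1, k - 2 * l)"
      unfolding H2_alt g1_def g3_def s e qq by (simp only: mult_ac mult_minus_left mult_minus_right)
  qed
  ultimately show "((\<lambda>p. H2 ((\<lambda>(k, l). (2 * k + l - 1, k - 2 * l)) p)) has_sum (- q * ((Pm q 10 10 * (Pm q 1 10 * Pm q 9 10)) * (Pm q 10 10 * (Pm q 3 10 * Pm q 7 10))))) UNIV"
    by simp
qed


lemma H2_rot: "H2 ((\<lambda>(m, n). (n, - m)) p) = H2 p"
proof (cases p)
  case (Pair m n)
  have "sg (n + - m) = sg (m + n)" by (rule sg_eq2[where t = "- m"]) simp
  then show ?thesis using Pair by (simp add: H2_alt add.commute)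
qed

lemma rho2_img: "0 \<le> c \<Longrightarrow> c < 5 \<Longrightarrow> (\<lambda>(m::int, n::int). (n, - m)) ` Cl c = Cl ((2 * c) mod 5)"
proof (intro set_eqI iffI)
  fix p assume c: "0 \<le> c" "c < 5" and "p \<in> (\<lambda>(m::int, n::int). (n, - m)) ` Cl c"
  then obtain m n where "p = (n, - m)" "(m - 2 * n) mod 5 = c" by (auto simp: Cl_def cls_def)
  then have h0: "(2 * (m - 2 * n) + 0 + 5 * n) mod 5 = (2 * c + 0) mod 5" by (intro mod5_lin) simp
  then have h1: "(2 * (m - 2 * n) + 5 * n) mod 5 = (2 * c) mod 5" by simp
  have eq: "n - 2 * (- m) = 2 * (m - 2 * n) + 5 * n" by simp
  have "cls (n, - m) = (2 * c) mod 5" by (simp only: cls_def fst_conv snd_conv eq h1)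
  then show "p \<in> Cl ((2 * c) mod 5)" using \<open>p = (n, - m)\<close> unfolding Cl_def by simp
next
  fix p assume c: "0 \<le> c" "c < 5" and "p \<in> Cl ((2 * c) mod 5)"
  then obtain m n where p: "p = (m, n)" and h: "(m - 2 * n) mod 5 = (2 * c) mod 5" by (cases p) (auto simp: Cl_def cls_def)
  have "((- 2) * (m - 2 * n) + 0 + 5 * (- n)) mod 5 = ((- 2) * ((2 * c) mod 5) + 0) mod 5"
    by (rule mod5_lin) (use h in simp)
  also have "((- 2) * ((2 * c) mod 5) + 0) mod 5 = ((- 2) * (2 * c)) mod 5" by (metis add_0_right mod_mult_right_eq)
  also have "((- 2) * (2 * c)) mod 5 = (c + 5 * (- c)) mod 5"
    by (rule arg_cong[where f = "\<lambda>x. x mod 5"]) (simp add: algebra_simps)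
  also have "\<dots> = c" using c by (simp only: mod5_shift mod5_small)
  finally have "(- n - 2 * m) mod 5 = c" by (simp add: algebra_simps)
  then have "(- n, m) \<in> Cl c" by (simp add: Cl_def cls_def)
  moreover have "p = (\<lambda>(m::int, n::int). (n, - m)) (- n, m)" using p by simp
  ultimately show "p \<in> (\<lambda>(m::int, n::int). (n, - m)) ` Cl c" by blast
qed

theorem S2_identity:
  "(Pm q 2 2 * (Pm q 1 2 * Pm q 1 2))^2 = (Pm q 10 10 * (Pm q 5 10 * Pm q 5 10))^2
     + 4 * (- q * ((Pm q 10 10 * (Pm q 1 10 * Pm q 9 10)) * (Pm q 10 10 * (Pm q 3 10 * Pm q 7 10))))"
proof -
  have inj: "inj (\<lambda>(m::int, n::int). (n, - m))" by (auto simp: inj_on_def)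
  have r: "\<And>p. H2 ((\<lambda>(m, n). (n, - m)) p) = H2 p" by (rule H2_rot)
  have e3: "infsum H2 (Cl 3) = infsum H2 (Cl 4)"
    by (rule rot_infsum[where \<rho> = "\<lambda>(m::int, n::int). (n, - m)" and H = H2, OF inj r]) (simp add: rho2_img)
  have e1: "infsum H2 (Cl 1) = infsum H2 (Cl 3)"
    by (rule rot_infsum[where \<rho> = "\<lambda>(m::int, n::int). (n, - m)" and H = H2, OF inj r]) (simp add: rho2_img)
  have e2: "infsum H2 (Cl 2) = infsum H2 (Cl 1)"
    by (rule rot_infsum[where \<rho> = "\<lambda>(m::int, n::int). (n, - m)" and H = H2, OF inj r]) (simp add: rho2_img)
  have "infsum H2 UNIV = infsum H2 (Cl 0) + infsum H2 (Cl 1) + infsum H2 (Cl 2) + infsum H2 (Cl 3) + infsum H2 (Cl 4)"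
    by (rule five_classes) (rule has_sum_imp_summable[OF H2_sum])
  also have "\<dots> = infsum H2 (Cl 0) + 4 * infsum H2 (Cl 4)" unfolding e2 e1 e3 by simp
  finally show ?thesis
    using infsumI[OF H2_sum] infsumI[OF H2_C0] infsumI[OF H2_C4] by simp
qed

end

lemma tri_nonneg: "0 \<le> tr m + m"
  using tr_nonneg[of "- m"] by (simp add: tr_neg)

lemma two_T: "2 * (tr m + m) = m * (m + 1)"
  using two_tr[of m] by (simp add: algebra_simps)

context
  fixes q :: complex
  assumes q0: "q \<noteq> 0" and q1: "norm q < 1"
begin

definition "u n = q ^ nat (tr n + n)"
definition "u5 n = q ^ nat (5 * tr n + 5 * n)"
definition "h4 n = q ^ nat (5 * tr n + 4 * n)"
definition "h3 n = q ^ nat (5 * tr n + 3 * n)"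

lemma u_sum: "(u has_sum (2 * Pm q 1 1 * Pp q 1 1 ^ 2)) UNIV"
proof -
  have "(\<lambda>n. q ^ nat (int 1 * tr n + int 1 * n)) = u" by (simp add: u_def fun_eq_iff)
  then show ?thesis using jtp_plus_eq[OF q0 q1, of 1] by simp
qed

lemma u5_sum: "(u5 has_sum (2 * Pm q 5 5 * Pp q 5 5 ^ 2)) UNIV"
proof -
  have "(\<lambda>n. q ^ nat (int 5 * tr n + int 5 * n)) = u5" by (simp add: u5_def fun_eq_iff)
  then show ?thesis using jtp_plus_eq[OF q0 q1, of 5] by simp
qed

lemma h4_sum: "(h4 has_sum (Pm q 5 5 * (Pp q 4 5 * Pp q 1 5))) UNIV"
proof -
  have "(\<lambda>n. q ^ nat (int 5 * tr n + int 4 * n)) = h4" by (simp add: h4_def fun_eq_iff)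
  then show ?thesis using jtp_plus[OF q0 q1, of 4 5] by simp
qed

lemma h3_sum: "(h3 has_sum (Pm q 5 5 * (Pp q 3 5 * Pp q 2 5))) UNIV"
proof -
  have "(\<lambda>n. q ^ nat (int 5 * tr n + int 3 * n)) = h3" by (simp add: h3_def fun_eq_iff)
  then show ?thesis using jtp_plus[OF q0 q1, of 3 5] by simp
qed

definition "H1 p = u (fst p) * u (snd p)"

lemma H1_alt: "H1 (m, n) = q ^ nat ((tr m + m) + (tr n + n))"
  unfolding H1_def u_def using tri_nonneg[of m] tri_nonneg[of n] by (simp add: qpow_add)

lemma H1_sum: "(H1 has_sum (2 * Pm q 1 1 * Pp q 1 1 ^ 2)^2) UNIV"
proof -
  have "((\<lambda>(m, n). u m * u n) has_sum (2 * Pm q 1 1 * Pp q 1 1 ^ 2) * (2 * Pm q 1 1 * Pp q 1 1 ^ 2)) UNIV"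
    by (rule has_sum_prod2[OF u_sum u_sum])
  moreover have "(\<lambda>(m, n). u m * u n) = H1" by (auto simp: H1_def)
  ultimately show ?thesis by (simp add: power2_eq_square)
qed

lemma H1_C3: "(H1 has_sum (q * (2 * Pm q 5 5 * Pp q 5 5 ^ 2)^2)) (Cl 3)"
proof (rule has_sum_onto[where \<phi> = "\<lambda>(i, j). (2 * i + j + 1, i - 2 * j - 1)"])
  show "inj (\<lambda>(i::int, j::int). (2 * i + j + 1, i - 2 * j - 1))"
    by (auto simp: inj_on_def)
  show "range (\<lambda>(i::int, j::int). (2 * i + j + 1, i - 2 * j - 1)) = Cl 3"
  proof (intro set_eqI iffI)
    fix p assume "p \<in> range (\<lambda>(i::int, j::int). (2 * i + j + 1, i - 2 * j - 1))"
    then show "p \<in> Cl 3" by (auto simp: Cl_def cls_def)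
  next
    fix p assume "p \<in> Cl 3"
    then obtain m n where p: "p = (m, n)" and c: "(m - 2 * n) mod 5 = 3" by (cases p) (auto simp: Cl_def cls_def)
    define j where "j = (m - 2 * n) div 5"
    have "m = 5 * j + 2 * n + 3" using mod5_decomp[OF c] unfolding j_def by linarith
    then have "p = (\<lambda>(i, j). (2 * i + j + 1, i - 2 * j - 1)) (n + 2 * j + 1, j)" using p by simp
    then show "p \<in> range (\<lambda>(i::int, j::int). (2 * i + j + 1, i - 2 * j - 1))" by blast
  qed
  have "((\<lambda>(i, j). q * (u5 i * u5 j)) has_sum (q * (2 * Pm q 5 5 * Pp q 5 5 ^ 2)^2)) UNIV"
    using has_sum_cmult_right[OF has_sum_prod2[OF u5_sum u5_sum], of q]
    by (simp add: case_prod_unfold power2_eq_square)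
  moreover have "(\<lambda>(i, j). q * (u5 i * u5 j)) = (\<lambda>p. H1 ((\<lambda>(i, j). (2 * i + j + 1, i - 2 * j - 1)) p))"
  proof (rule ext, clarify)
    fix i j :: int
    have e: "(tr (2 * i + j + 1) + (2 * i + j + 1)) + (tr (i - 2 * j - 1) + (i - 2 * j - 1))
        = 1 + (5 * tr i + 5 * i) + (5 * tr j + 5 * j)"
    proof -
      have "2 * ((tr (2 * i + j + 1) + (2 * i + j + 1)) + (tr (i - 2 * j - 1) + (i - 2 * j - 1)))
          = 2 * (1 + (5 * tr i + 5 * i) + (5 * tr j + 5 * j))"
        using two_tr[of i] two_tr[of j] two_tr[of "2 * i + j + 1"] two_tr[of "i - 2 * j - 1"] by algebra
      then show ?thesis by simp
    qed
    have n1: "0 \<le> 5 * tr i + 5 * i" "0 \<le> 5 * tr j + 5 * j" using tri_nonneg[of i] tri_nonneg[of j] by simp_all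
    have qq: "q ^ nat (1 + (5 * tr i + 5 * i) + (5 * tr j + 5 * j)) = q * (q ^ nat (5 * tr i + 5 * i) * q ^ nat (5 * tr j + 5 * j))"
      using n1 by (simp only: nat_add_distrib power_add) simp
    show "q * (u5 i * u5 j) = H1 (2 * i + j + 1, i - 2 * j - 1)"
      unfolding H1_alt u5_def e qq ..
  qed
  ultimately show "((\<lambda>p. H1 ((\<lambda>(i, j). (2 * i + j + 1, i - 2 * j - 1)) p)) has_sum (q * (2 * Pm q 5 5 * Pp q 5 5 ^ 2)^2)) UNIV"
    by simp
qed

lemma H1_C0: "(H1 has_sum ((Pm q 5 5 * (Pp q 4 5 * Pp q 1 5)) * (Pm q 5 5 * (Pp q 3 5 * Pp q 2 5)))) (Cl 0)"
proof (rule has_sum_onto[where \<phi> = "\<lambda>(k, l). (2 * k - l, k + 2 * l)"])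
  show "inj (\<lambda>(k::int, l::int). (2 * k - l, k + 2 * l))"
    by (auto simp: inj_on_def)
  show "range (\<lambda>(k::int, l::int). (2 * k - l, k + 2 * l)) = Cl 0"
  proof (intro set_eqI iffI)
    fix p assume "p \<in> range (\<lambda>(k::int, l::int). (2 * k - l, k + 2 * l))"
    then show "p \<in> Cl 0" by (auto simp: Cl_def cls_def)
  next
    fix p assume "p \<in> Cl 0"
    then obtain m n where p: "p = (m, n)" and c: "(m - 2 * n) mod 5 = 0" by (cases p) (auto simp: Cl_def cls_def)
    define l where "l = - ((m - 2 * n) div 5)"
    have "m = 2 * n - 5 * l" using mod5_decomp[OF c] unfolding l_def by linarith
    then have "p = (\<lambda>(k, l). (2 * k - l, k + 2 * l)) (n - 2 * l, l)" using p by simp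
    then show "p \<in> range (\<lambda>(k::int, l::int). (2 * k - l, k + 2 * l))" by blast
  qed
  have "((\<lambda>(k, l). h4 k * h3 l) has_sum ((Pm q 5 5 * (Pp q 4 5 * Pp q 1 5)) * (Pm q 5 5 * (Pp q 3 5 * Pp q 2 5)))) UNIV"
    by (rule has_sum_prod2[OF h4_sum h3_sum])
  moreover have "(\<lambda>(k, l). h4 k * h3 l) = (\<lambda>p. H1 ((\<lambda>(k, l). (2 * k - l, k + 2 * l)) p))"
  proof (rule ext, clarify)
    fix k l :: int
    have e: "(tr (2 * k - l) + (2 * k - l)) + (tr (k + 2 * l) + (k + 2 * l))
        = (5 * tr k + 4 * k) + (5 * tr l + 3 * l)"
    proof -
      have "2 * ((tr (2 * k - l) + (2 * k - l)) + (tr (k + 2 * l) + (k + 2 * l)))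
          = 2 * ((5 * tr k + 4 * k) + (5 * tr l + 3 * l))"
        using two_tr[of k] two_tr[of l] two_tr[of "2 * k - l"] two_tr[of "k + 2 * l"] by algebra
      then show ?thesis by simp
    qed
    have n1: "0 \<le> 5 * tr k + 4 * k" "0 \<le> 5 * tr l + 3 * l"
      using expo_nonneg[of 4 5 k] expo_nonneg[of 3 5 l] by simp_all
    have qq: "q ^ nat ((5 * tr k + 4 * k) + (5 * tr l + 3 * l)) = q ^ nat (5 * tr k + 4 * k) * q ^ nat (5 * tr l + 3 * l)"
      using n1 by (simp only: nat_add_distrib power_add)
    show "h4 k * h3 l = H1 (2 * k - l, k + 2 * l)"
      unfolding H1_alt h4_def h3_def e qq ..
  qed
  ultimately show "((\<lambda>p. H1 ((\<lambda>(k, l). (2 * k - l, k + 2 * l)) p)) has_sum ((Pm q 5 5 * (Pp q 4 5 * Pp q 1 5)) * (Pm q 5 5 * (Pp q 3 5 * Pp q 2 5)))) UNIV"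
    by simp
qed

lemma H1_rot: "H1 ((\<lambda>(m, n). (n, - m - 1)) p) = H1 p"
proof (cases p)
  case (Pair m n)
  have t: "tr (- m - 1) + (- m - 1) = tr m + m"
  proof -
    have "2 * (tr (- m - 1) + (- m - 1)) = 2 * (tr m + m)" unfolding two_T by (simp add: algebra_simps)
    then show ?thesis by simp
  qed
  have "H1 (n, - m - 1) = q ^ nat ((tr n + n) + (tr m + m))" by (simp only: H1_alt t)
  also have "\<dots> = q ^ nat ((tr m + m) + (tr n + n))" by (simp only: add.commute[of "tr n + n"])
  also have "\<dots> = H1 (m, n)" by (simp only: H1_alt)
  finally show ?thesis using Pair by simp
qed

lemma rho1_img: "0 \<le> c \<Longrightarrow> c < 5 \<Longrightarrow> (\<lambda>(m::int, n::int). (n, - m - 1)) ` Cl c = Cl ((2 * c + 2) mod 5)"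
proof (intro set_eqI iffI)
  fix p assume c: "0 \<le> c" "c < 5" and "p \<in> (\<lambda>(m::int, n::int). (n, - m - 1)) ` Cl c"
  then obtain m n where "p = (n, - m - 1)" "(m - 2 * n) mod 5 = c" by (auto simp: Cl_def cls_def)
  then have h1: "(2 * (m - 2 * n) + 2 + 5 * n) mod 5 = (2 * c + 2) mod 5" by (intro mod5_lin) simp
  have eq: "n - 2 * (- m - 1) = 2 * (m - 2 * n) + 2 + 5 * n" by simp
  have "cls (n, - m - 1) = (2 * c + 2) mod 5" by (simp only: cls_def fst_conv snd_conv eq h1)
  then show "p \<in> Cl ((2 * c + 2) mod 5)" using \<open>p = (n, - m - 1)\<close> unfolding Cl_def by simp
next
  fix p assume c: "0 \<le> c" "c < 5" and "p \<in> Cl ((2 * c + 2) mod 5)"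
  then obtain a b where p: "p = (a, b)" and h: "(a - 2 * b) mod 5 = (2 * c + 2) mod 5" by (cases p) (auto simp: Cl_def cls_def)
  have "((- 2) * (a - 2 * b) + (- 1) + 5 * (- b)) mod 5 = ((- 2) * ((2 * c + 2) mod 5) + (- 1)) mod 5"
    by (rule mod5_lin) (use h in simp)
  also have "((- 2) * ((2 * c + 2) mod 5) + (- 1)) mod 5 = ((- 2) * (2 * c + 2) + (- 1)) mod 5"
    by (metis mod_add_left_eq mod_mult_right_eq)
  also have "((- 2) * (2 * c + 2) + (- 1)) mod 5 = (c + 5 * (- c - 1)) mod 5"
    by (rule arg_cong[where f = "\<lambda>x. x mod 5"]) (simp add: algebra_simps)
  also have "\<dots> = c" using c by (simp only: mod5_shift mod5_small)
  finally have "(- b - 1 - 2 * a) mod 5 = c" by (simp add: algebra_simps)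
  then have "(- b - 1, a) \<in> Cl c" by (simp add: Cl_def cls_def)
  moreover have "p = (\<lambda>(m::int, n::int). (n, - m - 1)) (- b - 1, a)" using p by simp
  ultimately show "p \<in> (\<lambda>(m::int, n::int). (n, - m - 1)) ` Cl c" by blast
qed

theorem S1_identity:
  "(2 * Pm q 1 1 * Pp q 1 1 ^ 2)^2 = q * (2 * Pm q 5 5 * Pp q 5 5 ^ 2)^2
     + 4 * ((Pm q 5 5 * (Pp q 4 5 * Pp q 1 5)) * (Pm q 5 5 * (Pp q 3 5 * Pp q 2 5)))"
proof -
  have inj: "inj (\<lambda>(m::int, n::int). (n, - m - 1))" by (auto simp: inj_on_def)
  have r: "\<And>p. H1 ((\<lambda>(m, n). (n, - m - 1)) p) = H1 p" by (rule H1_rot)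
  have e2: "infsum H1 (Cl 2) = infsum H1 (Cl 0)"
    by (rule rot_infsum[where \<rho> = "\<lambda>(m::int, n::int). (n, - m - 1)" and H = H1, OF inj r]) (simp add: rho1_img)
  have e1: "infsum H1 (Cl 1) = infsum H1 (Cl 2)"
    by (rule rot_infsum[where \<rho> = "\<lambda>(m::int, n::int). (n, - m - 1)" and H = H1, OF inj r]) (simp add: rho1_img)
  have e4: "infsum H1 (Cl 4) = infsum H1 (Cl 1)"
    by (rule rot_infsum[where \<rho> = "\<lambda>(m::int, n::int). (n, - m - 1)" and H = H1, OF inj r]) (simp add: rho1_img)
  have "infsum H1 UNIV = infsum H1 (Cl 0) + infsum H1 (Cl 1) + infsum H1 (Cl 2) + infsum H1 (Cl 3) + infsum H1 (Cl 4)"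
    by (rule five_classes) (rule has_sum_imp_summable[OF H1_sum])
  also have "\<dots> = infsum H1 (Cl 3) + 4 * infsum H1 (Cl 0)" unfolding e4 e1 e2 by simp
  finally show ?thesis
    using infsumI[OF H1_sum] infsumI[OF H1_C3] infsumI[OF H1_C0] by simp
qed

end

lemma final_alg:
  fixes q E R P D :: complex
  assumes nz: "E \<noteq> 0" "R \<noteq> 0" "P \<noteq> 0" "D \<noteq> 0"
    and s1: "E^2 = q * D^2 * R^2 + P^4 * D^2 * R"
    and s2: "E^2 * R^4 * P^4 = D^2 * P^4 - 4 * q * D^2 * R"
  shows "- q * ((P*D) ^ 5 / (E*R*P) + 2 * q * D ^ 5 / E) ^ 2
           + (E*R*P) ^ 4 * (P*D) ^ 4
           + 9 * q * (P*D) ^ 10 / (E*R*P) ^ 2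
           - 8 * q ^ 3 * D ^ 10 / E ^ 2
         = E ^ 4 * (P*D) ^ 12 / ((E*R*P) ^ 4 * D ^ 4)
           + 4 * q ^ 2 * E ^ 2 * (P*D) ^ 2 * D ^ 6 / (E*R*P) ^ 2"
proof -
  define G where "G = E^8*R^8*P^12*D^8 + 8*q*E^2*R^2*P^12*D^14 - 4*q^2*E^2*R^3*P^8*D^14
     - 12*q^3*E^2*R^4*P^4*D^14 - E^4*P^12*D^12 - 4*q^2*E^4*R^2*P^4*D^12"
  have cert: "G = ((-1*R*P^16*D^14) + (-1*R^6*P^20*D^14) + (-1*E^2*P^12*D^12) + (1*E^2*R^10*P^20*D^12) + (1*E^4*R^9*P^16*D^10) + (1*E^6*R^8*P^12*D^8) + (7*q*R^2*P^12*D^14) + (2*q*R^7*P^16*D^14) + (2*q*E^2*R^11*P^16*D^12) + (1*q*E^4*R^10*P^12*D^10) + (-8*q^2*R^3*P^8*D^14) + (7*q^2*R^8*P^12*D^14) + (-4*q^2*E^2*R^2*P^4*D^12) + (1*q^2*E^2*R^12*P^12*D^12) + (-16*q^3*R^4*P^4*D^14) + (4*q^3*R^9*P^8*D^14)) * (E^2 - q * D^2 * R^2 - P^4 * D^2 * R)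
     + ((1*R^2*P^16*D^14) + (1*R^7*P^20*D^14) + (-2*q*R^3*P^12*D^14) + (3*q*R^8*P^16*D^14) + (-7*q^2*R^4*P^8*D^14) + (3*q^2*R^9*P^12*D^14) + (-4*q^3*R^5*P^4*D^14) + (1*q^3*R^10*P^8*D^14)) * (E^2 * R^4 * P^4 - D^2 * P^4 + 4 * q * D^2 * R)"
    unfolding G_def by algebra
  have G0: "G = 0" unfolding cert using s1 s2 by simp
  have L: "(- q * ((P*D) ^ 5 / (E*R*P) + 2 * q * D ^ 5 / E) ^ 2
           + (E*R*P) ^ 4 * (P*D) ^ 4
           + 9 * q * (P*D) ^ 10 / (E*R*P) ^ 2
           - 8 * q ^ 3 * D ^ 10 / E ^ 2
         - (E ^ 4 * (P*D) ^ 12 / ((E*R*P) ^ 4 * D ^ 4)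
           + 4 * q ^ 2 * E ^ 2 * (P*D) ^ 2 * D ^ 6 / (E*R*P) ^ 2)) * ((E*R*P)^4 * D^4) = G"
    unfolding G_def using nz by (simp add: field_simps) algebra
  have "(E*R*P)^4 * D^4 \<noteq> 0" using nz by simp
  with L G0 show ?thesis by simp
qed

lemma eta_Pm: "m > 0 \<Longrightarrow> eta_f m q = Pm q m m"
  unfolding eta_f_def Pm_def by (rule prodinf_cong) (simp add: algebra_simps)

context
  fixes q :: complex
  assumes q0: "q \<noteq> 0" and q1: "norm q < 1"
begin

lemma splits:
  "Pm q 1 1 = Pm q 1 10 * Pm q 2 10 * Pm q 3 10 * Pm q 4 10 * Pm q 5 10 * Pm q 6 10 * Pm q 7 10 * Pm q 8 10 * Pm q 9 10 * Pm q 10 10"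
  "Pm q 2 2 = Pm q 2 10 * Pm q 4 10 * Pm q 6 10 * Pm q 8 10 * Pm q 10 10"
  "Pm q 1 2 = Pm q 1 10 * Pm q 3 10 * Pm q 5 10 * Pm q 7 10 * Pm q 9 10"
  "Pm q 5 5 = Pm q 5 10 * Pm q 10 10"
  "Pm q 1 5 = Pm q 1 10 * Pm q 6 10"
  "Pm q 2 5 = Pm q 2 10 * Pm q 7 10"
  "Pm q 3 5 = Pm q 3 10 * Pm q 8 10"
  "Pm q 4 5 = Pm q 4 10 * Pm q 9 10"
  using Pm_split[OF q1, of 1 10 1] Pm_split[OF q1, of 2 5 2] Pm_split[OF q1, of 2 5 1]
    Pm_split[OF q1, of 5 2 5] Pm_split[OF q1, of 5 2 1] Pm_split[OF q1, of 5 2 2]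
    Pm_split[OF q1, of 5 2 3] Pm_split[OF q1, of 5 2 4]
  by (simp_all add: numeral_eq_Suc mult_ac)

end

theorem lemma2p8:
  fixes q :: complex
  assumes "norm q < 1"
  shows "- q * (eta_f 5 q ^ 5 / eta_f 1 q + 2 * q * eta_f 10 q ^ 5 / eta_f 2 q) ^ 2
           + eta_f 1 q ^ 4 * eta_f 5 q ^ 4
           + 9 * q * eta_f 5 q ^ 10 / eta_f 1 q ^ 2
           - 8 * q ^ 3 * eta_f 10 q ^ 10 / eta_f 2 q ^ 2
         = eta_f 2 q ^ 4 * eta_f 5 q ^ 12 / (eta_f 1 q ^ 4 * eta_f 10 q ^ 4)
           + 4 * q ^ 2 * eta_f 2 q ^ 2 * eta_f 5 q ^ 2 * eta_f 10 q ^ 6 / eta_f 1 q ^ 2"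
proof (cases "q = 0")
  case True
  have e: "eta_f m 0 = 1" if "m > 0" for m
  proof -
    have "(\<lambda>n. 1 - (0::complex) ^ (m * Suc n)) = (\<lambda>n. 1)" using that by (simp add: fun_eq_iff)
    then show ?thesis unfolding eta_f_def by simp
  qed
  show ?thesis using True by (simp add: e)
next
  case False
  note q0 = False and q1 = assms
  have nz: "Pm q i 10 \<noteq> 0" if "i > 0" for i by (rule Pm_nz[OF q1]) (use that in auto)
  define E where "E = Pm q 2 10 * Pm q 4 10 * Pm q 6 10 * Pm q 8 10 * Pm q 10 10"
  define R where "R = Pm q 1 10 * Pm q 3 10 * Pm q 7 10 * Pm q 9 10"
  define P where "P = Pm q 5 10"
  define D where "D = Pm q 10 10"
  note sp = splits[OF q0 q1]
  have E0: "E \<noteq> 0" unfolding E_def using nz by simp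
  have R0: "R \<noteq> 0" unfolding R_def using nz by simp
  have P0: "P \<noteq> 0" unfolding P_def using nz by simp
  have D0: "D \<noteq> 0" unfolding D_def using nz by simp
  have ep: "eta_f 1 q = Pm q 1 1" "eta_f 2 q = Pm q 2 2" "eta_f 5 q = Pm q 5 5" "eta_f 10 q = Pm q 10 10"
    by (simp_all add: eta_Pm)
  have eta1: "eta_f 1 q = E * R * P" unfolding ep sp E_def R_def P_def by (simp only: mult_ac)
  have eta2: "eta_f 2 q = E" unfolding ep sp E_def by (simp only: mult_ac)
  have eta5: "eta_f 5 q = P * D" unfolding ep sp P_def D_def by (simp only: mult_ac)
  have eta10: "eta_f 10 q = D" unfolding ep D_def ..
  have s2: "E^2 * R^4 * P^4 = D^2 * P^4 - 4 * q * D^2 * R"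
    using S2_identity[OF q0 q1] unfolding sp E_def R_def P_def D_def by algebra
  have m11: "Pm q 1 1 = E * R * P" using eta1 ep by simp
  have m22: "Pm q 2 2 = E" using eta2 ep by simp
  have m55: "Pm q 5 5 = P * D" using eta5 ep by simp
  have pp11: "Pp q 1 1 * (E * R * P) = E" using Pp_Pm[OF q1, of 1 1] m11 m22 by simp
  have pp55: "Pp q 5 5 * (P * D) = D" using Pp_Pm[OF q1, of 5 5] m55 by (simp add: D_def)
  have pp45: "Pp q 4 5 * (Pm q 4 10 * Pm q 9 10) = Pm q 8 10" using Pp_Pm[OF q1, of 5 4] sp by simp
  have pp15: "Pp q 1 5 * (Pm q 1 10 * Pm q 6 10) = Pm q 2 10" using Pp_Pm[OF q1, of 5 1] sp by simp
  have pp35: "Pp q 3 5 * (Pm q 3 10 * Pm q 8 10) = Pm q 6 10" using Pp_Pm[OF q1, of 5 3] sp by simp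
  have pp25: "Pp q 2 5 * (Pm q 2 10 * Pm q 7 10) = Pm q 4 10" using Pp_Pm[OF q1, of 5 2] sp by simp
  have A1: "2 * Pm q 1 1 * Pp q 1 1 ^ 2 = 2 * E / (R * P)"
  proof -
    have e: "Pp q 1 1 = 1 / (R * P)" using pp11 E0 R0 P0 by (simp add: field_simps)
    show ?thesis unfolding m11 e using E0 R0 P0 by (simp add: field_simps power2_eq_square)
  qed
  have A5: "2 * Pm q 5 5 * Pp q 5 5 ^ 2 = 2 * D / P"
  proof -
    have e: "Pp q 5 5 = 1 / P" using pp55 D0 P0 by (simp add: field_simps)
    show ?thesis unfolding m55 e using D0 P0 by (simp add: field_simps power2_eq_square)
  qed
  have A3: "(Pm q 5 5 * (Pp q 4 5 * Pp q 1 5)) * (Pm q 5 5 * (Pp q 3 5 * Pp q 2 5)) = P^2 * D^2 / R"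
  proof -
    have e1: "Pp q 4 5 = Pm q 8 10 / (Pm q 4 10 * Pm q 9 10)" using pp45 nz by (simp add: field_simps)
    have e2: "Pp q 1 5 = Pm q 2 10 / (Pm q 1 10 * Pm q 6 10)" using pp15 nz by (simp add: field_simps)
    have e3: "Pp q 3 5 = Pm q 6 10 / (Pm q 3 10 * Pm q 8 10)" using pp35 nz by (simp add: field_simps)
    have e4: "Pp q 2 5 = Pm q 4 10 / (Pm q 2 10 * Pm q 7 10)" using pp25 nz by (simp add: field_simps)
    show ?thesis unfolding m55 R_def e1 e2 e3 e4 using nz by (simp add: field_simps power2_eq_square)
  qed
  have h1: "(2 * E / (R * P))^2 = q * (2 * D / P)^2 + 4 * (P^2 * D^2 / R)"
    using S1_identity[OF q0 q1] unfolding A1 A5 A3 .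
  have s1: "E^2 = q * D^2 * R^2 + P^4 * D^2 * R"
  proof -
    have h2: "(2 * E / (R * P))^2 * ((R * P)^2 * R) = (q * (2 * D / P)^2 + 4 * (P^2 * D^2 / R)) * ((R * P)^2 * R)"
      using h1 by simp
    have l: "(2 * E / (R * P))^2 * ((R * P)^2 * R) = (4 * R) * E^2"
      using R0 P0 by (simp add: field_simps power2_eq_square)
    have r: "(q * (2 * D / P)^2 + 4 * (P^2 * D^2 / R)) * ((R * P)^2 * R) = (4 * R) * (q * D^2 * R^2 + P^4 * D^2 * R)"
      using R0 P0 by (simp add: field_simps power2_eq_square) algebra
    have "4 * R \<noteq> 0" using R0 by simp
    then show ?thesis using h2 unfolding l r by simp
  qed
  show ?thesis unfolding eta1 eta2 eta5 eta10 by (rule final_alg[OF E0 R0 P0 D0 s1 s2])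
qed

end
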